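(* Let $n \ge 4$ be an integer with $n \ne 6$, and let $\rho$ be an integer with $1 \le \rho \le n$. Then there exists a $(3n+\rho,4)$-packing with exactly $n\rho + D(\rho,4)$ blocks in which the largest partial parallel class has size $\rho$.
   Context: For integers $v \ge k \ge 2$, a $(v,k)$-packing is a pair $(X,\mathcal{B})$ where $X$ is a set of $v$ points and $\mathcal{B}$ is a set of $k$-subsets of $X$ (blocks) such that every pair of distinct points lies in at most one block. For integers $m \ge 0$, $D(m,k)$ denotes the maximum number of $k$-subsets of an $m$-set such that every pair of points lies in at most one of them (so $D(m,k)=0$ if $m<k$). A partial parallel class (PPC) is a set of pairwise disjoint blocks; its size is the number of blocks. "The largest PPC has size $\rho$" means the packing has a PPC of size $\rho$ but none of size $\rho+1$. *)

theory Defs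
  imports Main
begin

definition is_packing :: "nat \<Rightarrow> nat \<Rightarrow> 'a set \<Rightarrow> 'a set set \<Rightarrow> bool" where
  "is_packing v k X \<B> \<longleftrightarrow>
     finite X \<and> card X = v \<and>
     (\<forall>B\<in>\<B>. B \<subseteq> X \<and> card B = k) \<and>
     (\<forall>x\<in>X. \<forall>y\<in>X. x \<noteq> y \<longrightarrow> card {B\<in>\<B>. x \<in> B \<and> y \<in> B} \<le> 1)"

definition D :: "nat \<Rightarrow> nat \<Rightarrow> nat" where
  "D m k = Max {card \<B> | \<B>. is_packing m k {0..<m} (\<B> :: nat set set)}"

definition is_PPC :: "'a set set \<Rightarrow> 'a set set \<Rightarrow> bool" where
  "is_PPC \<B> P \<longleftrightarrow> P \<subseteq> \<B> \<and> (\<forall>B\<in>P. \<forall>C\<in>P. B \<noteq> C \<longrightarrow> B \<inter> C = {})"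

definition largest_PPC_size :: "'a set set \<Rightarrow> nat \<Rightarrow> bool" where
  "largest_PPC_size \<B> \<rho> \<longleftrightarrow>
     (\<exists>P. is_PPC \<B> P \<and> card P = \<rho>) \<and> \<not> (\<exists>P. is_PPC \<B> P \<and> card P = \<rho> + 1)"

end

theory Submission
  imports Defs
begin


definition Qs :: "'a set \<Rightarrow> (nat \<Rightarrow> 'a set set) \<Rightarrow> nat \<Rightarrow> bool" where
 "Qs Y C n \<longleftrightarrow> finite Y \<and> card Y = 3*n \<and>
   (\<forall>i<n. (\<forall>T\<in>C i. T \<subseteq> Y \<and> card T = 3) \<and> \<Union>(C i) = Y \<and> (\<forall>T\<in>C i. \<forall>T'\<in>C i. T \<noteq> T' \<longrightarrow> T \<inter> T' = {})) \<and>
   (\<forall>i<n. \<forall>j<n. \<forall>T\<in>C i. \<forall>T'\<in>C j. (i \<noteq> j \<or> T \<noteq> T') \<longrightarrow> card (T \<inter> T') \<le> 1) \<and>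
   (\<exists>S. (\<forall>i<n. S i \<in> C i) \<and> (\<forall>i<n. \<forall>j<n. i \<noteq> j \<longrightarrow> S i \<inter> S j = {}))"

definition Qex :: "nat \<Rightarrow> bool" where "Qex n \<longleftrightarrow> (\<exists>(Y::nat set) C. Qs Y C n)"

context fixes Y :: "'a set" and C n assumes Q: "Qs Y C n" begin
lemma Qs_finite: "finite Y" using Q unfolding Qs_def by simp
lemma Qs_card: "card Y = 3*n" using Q unfolding Qs_def by simp
lemma Qs_sub: "i < n \<Longrightarrow> T \<in> C i \<Longrightarrow> T \<subseteq> Y" using Q unfolding Qs_def by simp
lemma Qs_card3: "i < n \<Longrightarrow> T \<in> C i \<Longrightarrow> card T = 3" using Q unfolding Qs_def by simp
lemma Qs_Union: "i < n \<Longrightarrow> \<Union>(C i) = Y" using Q unfolding Qs_def by simp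
lemma Qs_disj: "i < n \<Longrightarrow> T \<in> C i \<Longrightarrow> T' \<in> C i \<Longrightarrow> T \<noteq> T' \<Longrightarrow> T \<inter> T' = {}"
  using Q unfolding Qs_def by simp
lemma Qs_pair: "i < n \<Longrightarrow> j < n \<Longrightarrow> T \<in> C i \<Longrightarrow> T' \<in> C j \<Longrightarrow> i \<noteq> j \<or> T \<noteq> T' \<Longrightarrow> card (T \<inter> T') \<le> 1"
  using Q unfolding Qs_def by simp
lemma Qs_S: "\<exists>S. (\<forall>i<n. S i \<in> C i) \<and> (\<forall>i<n. \<forall>j<n. i \<noteq> j \<longrightarrow> S i \<inter> S j = {})"
  using Q unfolding Qs_def by (elim conjE) assumption
end

lemma QsI:
  assumes "finite Y" "card Y = 3*n"
    and "\<And>i T. i < n \<Longrightarrow> T \<in> C i \<Longrightarrow> T \<subseteq> Y"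
    and "\<And>i T. i < n \<Longrightarrow> T \<in> C i \<Longrightarrow> card T = 3"
    and "\<And>i. i < n \<Longrightarrow> \<Union>(C i) = Y"
    and "\<And>i T T'. i < n \<Longrightarrow> T \<in> C i \<Longrightarrow> T' \<in> C i \<Longrightarrow> T \<noteq> T' \<Longrightarrow> T \<inter> T' = {}"
    and "\<And>i j T T'. i < n \<Longrightarrow> j < n \<Longrightarrow> T \<in> C i \<Longrightarrow> T' \<in> C j \<Longrightarrow> i \<noteq> j \<or> T \<noteq> T' \<Longrightarrow> card (T \<inter> T') \<le> 1"
    and "\<And>i. i < n \<Longrightarrow> S i \<in> C i"
    and "\<And>i j. i < n \<Longrightarrow> j < n \<Longrightarrow> i \<noteq> j \<Longrightarrow> S i \<inter> S j = {}"
  shows "Qs Y C n"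
  unfolding Qs_def
  apply (intro conjI)
  subgoal by fact
  subgoal by fact
  subgoal using assms(3-6) by simp
  subgoal using assms(7) by simp
  subgoal using assms(8,9) by (intro exI[of _ S]) simp
  done

lemma Qs_transfer:
  assumes Q: "Qs (Y::'a set) C n" and fZ: "finite (Z::'b set)" and cZ: "card Z = 3*n"
  shows "\<exists>C'. Qs Z C' n"
proof -
  have fY: "finite Y" and cY: "card Y = 3*n" using Qs_finite[OF Q] Qs_card[OF Q] by auto
  obtain h where h: "bij_betw h Y Z" using finite_same_card_bij[OF fY fZ] cY cZ by auto
  have inj: "inj_on h Y" and img: "h ` Y = Z" using h by (auto simp: bij_betw_def)
  define C' where "C' i = (\<lambda>T. h ` T) ` C i" for i
  obtain S where S1: "\<forall>i<n. S i \<in> C i" and S2: "\<forall>i<n. \<forall>j<n. i \<noteq> j \<longrightarrow> S i \<inter> S j = {}"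
    using Qs_S[OF Q] by blast
  note part = Qs_sub[OF Q] Qs_card3[OF Q] Qs_Union[OF Q] Qs_disj[OF Q]
  note pair = Qs_pair[OF Q]
  have sub: "T \<subseteq> Y" if "i < n" "T \<in> C i" for i T using Qs_sub[OF Q] that by blast
  have imInt: "h ` T \<inter> h ` T' = h ` (T \<inter> T')" if "T \<subseteq> Y" "T' \<subseteq> Y" for T T'
    using inj_on_image_Int[OF inj that] by simp
  have "Qs Z C' n"
  proof (rule QsI[where S="\<lambda>i. h ` S i"])
    show "finite Z" by fact
    show "card Z = 3*n" by fact
    fix i assume i: "i < n"
    { fix T' assume "T' \<in> C' i"
      then obtain T where T: "T \<in> C i" "T' = h ` T" unfolding C'_def by auto
      have TY: "T \<subseteq> Y" and c3: "card T = 3" using Qs_sub[OF Q i T(1)] Qs_card3[OF Q i T(1)] by auto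
      show "T' \<subseteq> Z" using T TY img by auto
      show "card T' = 3" using T TY c3 inj_on_subset[OF inj TY] card_image by metis }
    show "\<Union>(C' i) = Z" using Qs_Union[OF Q i] img unfolding C'_def by auto
    { fix T1 T2 assume "T1 \<in> C' i" "T2 \<in> C' i" "T1 \<noteq> T2"
      then obtain U1 U2 where U: "U1 \<in> C i" "U2 \<in> C i" "T1 = h ` U1" "T2 = h ` U2" unfolding C'_def by auto
      with \<open>T1 \<noteq> T2\<close> have "U1 \<noteq> U2" by auto
      then have "U1 \<inter> U2 = {}" using Qs_disj[OF Q i U(1) U(2)] by blast
      then show "T1 \<inter> T2 = {}" using U imInt[OF sub[OF i U(1)] sub[OF i U(2)]] by simp }
    show "h ` S i \<in> C' i" using S1 i unfolding C'_def by auto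
  next
    fix i j T1 T2 assume ij: "i < n" "j < n" and T1: "T1 \<in> C' i" and T2: "T2 \<in> C' j" and ne: "i \<noteq> j \<or> T1 \<noteq> T2"
    obtain U1 where U1: "U1 \<in> C i" "T1 = h ` U1" using T1 unfolding C'_def by auto
    obtain U2 where U2: "U2 \<in> C j" "T2 = h ` U2" using T2 unfolding C'_def by auto
    have "i \<noteq> j \<or> U1 \<noteq> U2" using ne U1 U2 by auto
    then have "card (U1 \<inter> U2) \<le> 1" using Qs_pair[OF Q ij U1(1) U2(1)] by blast
    moreover have "T1 \<inter> T2 = h ` (U1 \<inter> U2)" using U1 U2 imInt[OF sub[OF ij(1) U1(1)] sub[OF ij(2) U2(1)]] by simp
    moreover have "card (h ` (U1 \<inter> U2)) \<le> card (U1 \<inter> U2)"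
      by (rule card_image_le) (use fY sub[OF ij(1) U1(1)] in \<open>auto intro: finite_subset\<close>)
    ultimately show "card (T1 \<inter> T2) \<le> 1" by simp
  next
    fix i j assume "i < n" "j < n" "i \<noteq> j"
    then show "h ` S i \<inter> h ` S j = {}" using S1 S2 imInt[OF sub sub] by (metis image_empty)
  qed
  then show ?thesis by blast
qed


lemma D_witness: "\<exists>P. is_packing r 4 {0..<r} (P::nat set set) \<and> card P = D r 4"
proof -
  let ?S = "{card B | B. is_packing r 4 {0..<r} (B::nat set set)}"
  have "?S \<subseteq> card ` Pow (Pow {0..<r})"
  proof
    fix x assume "x \<in> ?S"
    then obtain B where B: "is_packing r 4 {0..<r} (B::nat set set)" "x = card B" by blast
    then have "B \<in> Pow (Pow {0..<r})" unfolding is_packing_def by auto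
    then show "x \<in> card ` Pow (Pow {0..<r})" using B by blast
  qed
  then have fin: "finite ?S" by (rule finite_subset) simp
  have "is_packing r 4 {0..<r} ({}::nat set set)" unfolding is_packing_def by simp
  then have ne: "?S \<noteq> {}" by blast
  have "Max ?S \<in> ?S" using Max_in[OF fin ne] .
  then show ?thesis unfolding D_def by auto
qed

lemma card_le1I: "finite A \<Longrightarrow> (\<And>a b. a \<in> A \<Longrightarrow> b \<in> A \<Longrightarrow> a = b) \<Longrightarrow> card A \<le> 1"
  by (simp add: card_le_Suc0_iff_eq)

lemma Qs_card_class:
  assumes Q: "Qs Y C n" and i: "i < n"
  shows "card (C i) = n"
proof -
  have fY: "finite Y" using Qs_finite[OF Q] .
  have fC: "finite (C i)" using Qs_sub[OF Q i] fY by (meson Pow_iff finite_Pow_iff finite_subset subsetI)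
  have "card (\<Union>(C i)) = (\<Sum>T\<in>C i. card T)"
    apply (rule card_Union_disjoint)
    using Qs_disj[OF Q i] fC finite_subset[OF Qs_sub[OF Q i] fY] by (auto simp: pairwise_def disjnt_def)
  also have "\<dots> = (\<Sum>T\<in>C i. 3)" using Qs_card3[OF Q i] by simp
  also have "\<dots> = 3 * card (C i)" by simp
  finally show ?thesis using Qs_Union[OF Q i] Qs_card[OF Q] by simp
qed

lemma main_from_Q:
  assumes "Qex n" and r1: "1 \<le> r" and rn: "r \<le> n"
  shows "\<exists>X (B :: nat set set). is_packing (3*n + r) 4 X B \<and> card B = n * r + D r 4 \<and> largest_PPC_size B r"
proof -
  obtain P where P: "is_packing r 4 {0..<r} (P::nat set set)" and cP: "card P = D r 4"
    using D_witness by blast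
  obtain Y0 :: "nat set" and C0 where "Qs Y0 C0 n" using assms(1) unfolding Qex_def by blast
  define Z where "Z = {r..<r+3*n}"
  obtain C where Q: "Qs Z C n" using Qs_transfer[OF \<open>Qs Y0 C0 n\<close>, of Z] unfolding Z_def by auto
  obtain S where S1: "\<forall>i<n. S i \<in> C i" and S2: "\<forall>i<n. \<forall>j<n. i \<noteq> j \<longrightarrow> S i \<inter> S j = {}"
    using Qs_S[OF Q] by blast
  define Bl where "Bl = (\<lambda>(i,T). insert i T) ` Sigma {..<r} C"
  define B where "B = P \<union> Bl"
  define X where "X = {0..<3*n+r}"
  have PX: "b \<subseteq> {0..<r}" "card b = 4" if "b \<in> P" for b using P that unfolding is_packing_def by auto
  have TZ: "T \<subseteq> Z" if "i < r" "T \<in> C i" for i T using Qs_sub[OF Q, of i T] that rn by simp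
  have T3: "card T = 3" if "i < r" "T \<in> C i" for i T using Qs_card3[OF Q, of i T] that rn by simp
  have notin: "i \<notin> T" if "i < r" "T \<in> C i" for i T using TZ[OF that] that unfolding Z_def by auto
  have fZ: "finite Z" unfolding Z_def by simp
  have fP: "finite P" using P unfolding is_packing_def by (meson Pow_iff finite_Pow_iff finite_atLeastLessThan finite_subset subsetI)
  have fC: "finite (C i)" if "i < r" for i
    using TZ[OF that] fZ by (meson Pow_iff finite_Pow_iff finite_subset subsetI)
  have fBl: "finite Bl" unfolding Bl_def using fC by auto
  have fB: "finite B" unfolding B_def using fP fBl by auto
  have Blform: "\<exists>i T. i < r \<and> T \<in> C i \<and> b = insert i T" if "b \<in> Bl" for b
    using that unfolding Bl_def by auto
  have BlR: "b \<inter> {0..<r} = {i}" if "i < r" "T \<in> C i" "b = insert i T" for b i T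
    using TZ[OF that(1,2)] that unfolding Z_def by auto
  have pack: "is_packing (3*n + r) 4 X B"
    unfolding is_packing_def
  proof (intro conjI ballI impI)
    show "finite X" unfolding X_def by simp
    show "card X = 3*n + r" unfolding X_def by simp
    fix b assume b: "b \<in> B"
    show "b \<subseteq> X"
    proof (cases "b \<in> P")
      case True then show ?thesis using PX unfolding X_def by fastforce
    next
      case False then have "b \<in> Bl" using b unfolding B_def by auto
      then obtain i T where iT: "i < r" "T \<in> C i" "b = insert i T" using Blform by blast
      then show ?thesis using TZ[OF iT(1,2)] unfolding X_def Z_def by auto
    qed
    show "card b = 4"
    proof (cases "b \<in> P")
      case True then show ?thesis using PX by blast
    next
      case False then have "b \<in> Bl" using b unfolding B_def by auto
      then obtain i T where iT: "i < r" "T \<in> C i" "b = insert i T" using Blform by blast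
      then show ?thesis using T3[OF iT(1,2)] notin[OF iT(1,2)] TZ[OF iT(1,2)] fZ
        by (simp add: finite_subset)
    qed
  next
    fix x y assume x: "x \<in> X" and y: "y \<in> X" and xy: "x \<noteq> y"
    show "card {b \<in> B. x \<in> b \<and> y \<in> b} \<le> 1"
    proof (rule card_le1I)
      show "finite {b \<in> B. x \<in> b \<and> y \<in> b}" using fB by simp
    next
      fix b1 b2 assume b1: "b1 \<in> {b \<in> B. x \<in> b \<and> y \<in> b}" and b2: "b2 \<in> {b \<in> B. x \<in> b \<and> y \<in> b}"
      have casesB: "b \<in> P \<or> (\<exists>i T. i < r \<and> T \<in> C i \<and> b = insert i T)" if "b \<in> B" for b
        using that Blform unfolding B_def by auto
      show "b1 = b2"
      proof (cases "x < r \<and> y < r")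
        case True
        have inP: "b \<in> P" if bB: "b \<in> B" and xb: "x \<in> b" and yb: "y \<in> b" for b
        proof -
          { assume "b \<notin> P"
            then obtain i T where iT: "i < r" "T \<in> C i" "b = insert i T" using casesB[OF bB] by blast
            have "x \<in> b \<inter> {0..<r}" "y \<in> b \<inter> {0..<r}" using True xb yb by auto
            then have False using BlR[OF iT] xy by auto }
          then show ?thesis by blast
        qed
        have "b1 \<in> P" "b2 \<in> P" using inP b1 b2 by auto
        moreover have "x \<in> {0..<r}" "y \<in> {0..<r}" using True by auto
        ultimately have "card {b \<in> P. x \<in> b \<and> y \<in> b} \<le> 1" using P xy unfolding is_packing_def by blast
        moreover have "b1 \<in> {b \<in> P. x \<in> b \<and> y \<in> b}" "b2 \<in> {b \<in> P. x \<in> b \<and> y \<in> b}"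
          using b1 b2 \<open>b1 \<in> P\<close> \<open>b2 \<in> P\<close> by auto
        ultimately show ?thesis using fP by (metis (no_types, lifting) card_le_Suc0_iff_eq finite_subset mem_Collect_eq One_nat_def subsetI)
      next
        case False
        have notP: "b \<notin> P" if "b \<in> B" "x \<in> b" "y \<in> b" for b
          using PX False that by fastforce
        obtain i1 T1 where 1: "i1 < r" "T1 \<in> C i1" "b1 = insert i1 T1" using casesB b1 notP by blast
        obtain i2 T2 where 2: "i2 < r" "T2 \<in> C i2" "b2 = insert i2 T2" using casesB b2 notP by blast
        show ?thesis
        proof (cases "x < r \<or> y < r")
          case True
          have xyb: "x \<in> b1" "y \<in> b1" "x \<in> b2" "y \<in> b2" using b1 b2 by auto
          obtain z w where zw: "z < r" "w \<ge> r" "z \<in> b1" "z \<in> b2" "w \<in> b1" "w \<in> b2"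
          proof (cases "x < r")
            case True
            then have "\<not> y < r" using \<open>\<not> (x < r \<and> y < r)\<close> by simp
            then show ?thesis using that[of x y] True xyb by simp
          next
            case False
            then have "y < r" using \<open>x < r \<or> y < r\<close> by simp
            then show ?thesis using that[of y x] False xyb by simp
          qed
          have "z \<in> b1 \<inter> {0..<r}" "z \<in> b2 \<inter> {0..<r}" using zw by simp_all
          then have zi: "z = i1" "z = i2" using BlR[OF 1] BlR[OF 2] by simp_all
          have "w \<notin> {0..<r}" using zw by simp
          then have "w \<noteq> i1" "w \<noteq> i2" using 1 2 by auto
          then have "w \<in> T1" "w \<in> T2" using zw(5,6) 1(3) 2(3) by simp_all
          then have "T1 \<inter> T2 \<noteq> {}" by blast
          moreover have "i1 < n" using 1 rn by simp
          ultimately have "T1 = T2" using Qs_disj[OF Q, of i1 T1 T2] 1 2 zi by blast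
          then show ?thesis using 1 2 zi by simp
        next
          case False
          then have "x \<notin> {0..<r}" "y \<notin> {0..<r}" by auto
          then have "x \<in> T1" "y \<in> T1" "x \<in> T2" "y \<in> T2" using b1 b2 1 2 by auto
          then have "{x,y} \<subseteq> T1 \<inter> T2" by auto
          then have "2 \<le> card (T1 \<inter> T2)"
            using xy card_mono[of "T1 \<inter> T2" "{x,y}"] TZ[OF 1(1,2)] fZ
            by (metis card_2_iff finite_Int finite_subset)
          then have "\<not> (i1 \<noteq> i2 \<or> T1 \<noteq> T2)" using Qs_pair[OF Q, of i1 i2 T1 T2] 1 2 rn by auto
          then show ?thesis using 1 2 by simp
        qed
      qed
    qed
  qed
  have PBl: "P \<inter> Bl = {}"
  proof -
    { fix b assume "b \<in> P" "b \<in> Bl"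
      then obtain i T where iT: "i < r" "T \<in> C i" "b = insert i T" using Blform by blast
      have "card T = 3" using T3[OF iT(1,2)] .
      then obtain t where "t \<in> T" by (metis card.empty equals0I zero_neq_numeral)
      then have "t \<ge> r" using TZ[OF iT(1,2)] unfolding Z_def by auto
      moreover have "t \<in> b" using iT \<open>t \<in> T\<close> by auto
      ultimately have False using PX[OF \<open>b \<in> P\<close>] by auto }
    then show ?thesis by blast
  qed
  have injBl: "inj_on (\<lambda>(i,T). insert i T) (Sigma {..<r} C)"
  proof (rule inj_onI, clarsimp)
    fix i T j T' assume a: "i < r" "T \<in> C i" "j < r" "T' \<in> C j" "insert i T = insert j T'"
    have "i = j" using BlR[OF a(1,2) refl] BlR[OF a(3,4) refl] a(5) by auto
    moreover then have "T = T'" using a notin by (metis insert_ident)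
    ultimately show "i = j \<and> T = T'" by simp
  qed
  have "card Bl = card (Sigma {..<r} C)" unfolding Bl_def using card_image[OF injBl] .
  also have "\<dots> = (\<Sum>i<r. card (C i))" using fC by (simp add: card_SigmaI)
  also have "\<dots> = (\<Sum>i<r. n)" using Qs_card_class[OF Q] rn by simp
  also have "\<dots> = n * r" by simp
  finally have cBl: "card Bl = n * r" .
  have cardB: "card B = n * r + D r 4"
    unfolding B_def using card_Un_disjoint[OF fP fBl PBl] cBl cP by simp
  have blockR: "b \<inter> {0..<r} \<noteq> {}" if "b \<in> B" for b
  proof (cases "b \<in> P")
    case True
    then have "card b = 4" "b \<subseteq> {0..<r}" using PX by auto
    then have "b \<noteq> {}" by auto
    then show ?thesis using \<open>b \<subseteq> {0..<r}\<close> by blast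
  next
    case False then have "b \<in> Bl" using that unfolding B_def by auto
    then obtain i T where iT: "i < r" "T \<in> C i" "b = insert i T" using Blform by blast
    then have "i \<in> b \<inter> {0..<r}" by simp
    then show ?thesis by blast
  qed
  have ppc: "largest_PPC_size B r"
    unfolding largest_PPC_size_def
  proof (intro conjI)
    define P0 where "P0 = (\<lambda>i. insert i (S i)) ` {..<r}"
    have inj0: "inj_on (\<lambda>i. insert i (S i)) {..<r}"
    proof (rule inj_onI)
      fix i j assume "i \<in> {..<r}" "j \<in> {..<r}" "insert i (S i) = insert j (S j)"
      then have ij: "i < r" "j < r" "insert i (S i) = insert j (S j)" by auto
      have "S i \<in> C i" "S j \<in> C j" using S1 ij rn by auto
      then have e1: "insert i (S i) \<inter> {0..<r} = {i}" and e2: "insert j (S j) \<inter> {0..<r} = {j}"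
        using BlR[OF ij(1) _ refl] BlR[OF ij(2) _ refl] by auto
      have "{i} = {j}" using e1 e2 ij(3) by argo
      then show "i = j" by simp
    qed
    have "is_PPC B P0"
      unfolding is_PPC_def
    proof (intro conjI ballI impI)
      have "(\<lambda>i. insert i (S i)) ` {..<r} \<subseteq> Bl"
      proof
        fix b assume "b \<in> (\<lambda>i. insert i (S i)) ` {..<r}"
        then obtain i where "i < r" "b = insert i (S i)" by auto
        moreover have "S i \<in> C i" using S1 \<open>i < r\<close> rn by auto
        ultimately show "b \<in> Bl" unfolding Bl_def by force
      qed
      then show "P0 \<subseteq> B" unfolding P0_def B_def by blast
    next
      fix b c assume "b \<in> P0" "c \<in> P0" "b \<noteq> c"
      then obtain i j where ij: "i < r" "j < r" "b = insert i (S i)" "c = insert j (S j)" "i \<noteq> j"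
        unfolding P0_def by auto
      have d: "S i \<inter> S j = {}" using S2 ij rn by auto
      have "S j \<subseteq> Z" "S i \<subseteq> Z" using TZ S1 ij rn by auto
      moreover have "i \<notin> Z" "j \<notin> Z" using ij unfolding Z_def by auto
      ultimately have "i \<notin> S j" "j \<notin> S i" by auto
      then show "b \<inter> c = {}" using ij d by auto
    qed
    moreover have "card P0 = r" unfolding P0_def using card_image[OF inj0] by simp
    ultimately show "\<exists>P. is_PPC B P \<and> card P = r" by blast
  next
    show "\<not> (\<exists>P. is_PPC B P \<and> card P = r + 1)"
    proof
      assume "\<exists>P. is_PPC B P \<and> card P = r + 1"
      then obtain Q0 where Q0: "is_PPC B Q0" "card Q0 = r + 1" by blast
      have sub: "Q0 \<subseteq> B" and dis: "\<forall>b\<in>Q0. \<forall>c\<in>Q0. b \<noteq> c \<longrightarrow> b \<inter> c = {}"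
        using Q0(1) unfolding is_PPC_def by auto
      define f where "f b = (SOME x. x \<in> b \<inter> {0..<r})" for b
      have fin: "f b \<in> b \<inter> {0..<r}" if "b \<in> Q0" for b
      proof -
        have "b \<in> B" using sub that by blast
        then have "b \<inter> {0..<r} \<noteq> {}" using blockR by blast
        then have "\<exists>x. x \<in> b \<inter> {0..<r}" by blast
        then show ?thesis unfolding f_def by (rule someI_ex)
      qed
      have "inj_on f Q0"
      proof (rule inj_onI)
        fix b c assume "b \<in> Q0" "c \<in> Q0" "f b = f c"
        have "f b \<in> b" using fin[OF \<open>b \<in> Q0\<close>] by blast
        moreover have "f c \<in> c" using fin[OF \<open>c \<in> Q0\<close>] by blast
        ultimately have "b \<inter> c \<noteq> {}" using \<open>f b = f c\<close> by auto
        then show "b = c" using dis \<open>b \<in> Q0\<close> \<open>c \<in> Q0\<close> by blast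
      qed
      then have "card Q0 \<le> card {0..<r}"
      proof (rule card_inj_on_le)
        show "f ` Q0 \<subseteq> {0..<r}" using fin by blast
      qed simp
      then show False using Q0(2) by simp
    qed
  qed
  show ?thesis using pack cardB ppc by blast
qed


lemma Qex_of_Qs: "Qs (Y::'a set) C n \<Longrightarrow> Qex n"
  using Qs_transfer[of Y C n "{0..<3*n}"] unfolding Qex_def by auto

type_synonym pnt = "int \<times> int \<times> int"

definition Yp :: "int \<Rightarrow> int \<Rightarrow> pnt set" where "Yp k m = {0..<k} \<times> {0..<m} \<times> {0..<3}"

definition tr :: "int \<Rightarrow> int \<Rightarrow> int \<times> int \<Rightarrow> pnt \<Rightarrow> pnt" where
  "tr k m g p = (case p of (a,b,j) \<Rightarrow> ((a + fst g) mod k, (b + snd g) mod m, j))"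

definition key :: "int \<Rightarrow> int \<Rightarrow> pnt \<Rightarrow> pnt \<Rightarrow> int \<times> int \<times> int \<times> int" where
  "key k m p q = (case p of (a,b,j) \<Rightarrow> case q of (a',b',j') \<Rightarrow> (j, j', (a' - a) mod k, (b' - b) mod m))"

definition lev :: "pnt \<Rightarrow> int" where "lev p = snd (snd p)"

lemma lev_tr[simp]: "lev (tr k m g p) = lev p"
  unfolding lev_def tr_def by (cases p) auto

lemma tr_in: "p \<in> Yp k m \<Longrightarrow> k > 0 \<Longrightarrow> m > 0 \<Longrightarrow> tr k m g p \<in> Yp k m"
  unfolding Yp_def tr_def by (cases p) auto

lemma mod_eq_small: "0 \<le> (a::int) \<Longrightarrow> a < k \<Longrightarrow> 0 \<le> b \<Longrightarrow> b < k \<Longrightarrow> a mod k = b mod k \<Longrightarrow> a = b"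
  by simp

lemma tr_inj: assumes "p \<in> Yp k m" "q \<in> Yp k m" "tr k m g p = tr k m g q" shows "p = q"
proof -
  obtain a b j where p: "p = (a,b,j)" by (cases p) auto
  obtain a' b' j' where q: "q = (a',b',j')" by (cases q) auto
  have r: "0 \<le> a" "a < k" "0 \<le> b" "b < m" "0 \<le> a'" "a' < k" "0 \<le> b'" "b' < m"
    using assms(1,2) p q unfolding Yp_def by auto
  from assms(3) have e: "(a + fst g) mod k = (a' + fst g) mod k" "(b + snd g) mod m = (b' + snd g) mod m" "j = j'"
    unfolding tr_def p q by auto
  have "a mod k = a' mod k" using e(1) by (metis add_diff_cancel_right' mod_diff_left_eq)
  then have "a = a'" using r by simp
  moreover have "b mod m = b' mod m" using e(2) by (metis add_diff_cancel_right' mod_diff_left_eq)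
  then have "b = b'" using r by simp
  ultimately show ?thesis using p q e(3) by simp
qed

lemma key_tr: "key k m (tr k m g p) (tr k m g q) = key k m p q"
proof -
  obtain a b j where p: "p = (a,b,j)" by (cases p) auto
  obtain a' b' j' where q: "q = (a',b',j')" by (cases q) auto
  have "((a' + fst g) mod k - (a + fst g) mod k) mod k = (a' - a) mod k"
    by (metis (no_types) add_diff_cancel_right mod_diff_eq)
  moreover have "((b' + snd g) mod m - (b + snd g) mod m) mod m = (b' - b) mod m"
    by (metis (no_types) add_diff_cancel_right mod_diff_eq)
  ultimately show ?thesis unfolding key_def tr_def p q by simp
qed

lemma tr_g_inj:
  assumes "p \<in> Yp k m" "tr k m g p = tr k m h p" "0 \<le> fst g" "fst g < k" "0 \<le> snd g" "snd g < m"
    "0 \<le> fst h" "fst h < k" "0 \<le> snd h" "snd h < m"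
  shows "g = h"
proof -
  obtain a b j where p: "p = (a,b,j)" by (cases p) auto
  from assms(2) have e: "(a + fst g) mod k = (a + fst h) mod k" "(b + snd g) mod m = (b + snd h) mod m"
    unfolding tr_def p by auto
  have "fst g mod k = fst h mod k" using e(1) by (metis add.commute add_diff_cancel_right' mod_diff_left_eq)
  then have "fst g = fst h" using assms by simp
  moreover have "snd g mod m = snd h mod m" using e(2) by (metis add.commute add_diff_cancel_right' mod_diff_left_eq)
  then have "snd g = snd h" using assms by simp
  ultimately show ?thesis by (simp add: prod_eq_iff)
qed

lemma tr_surj: assumes "y \<in> Yp k m" "k > 0" "m > 0" shows "\<exists>p\<in>Yp k m. tr k m g p = y"
proof -
  obtain a b j where y: "y = (a,b,j)" by (cases y) auto
  have r: "0 \<le> a" "a < k" "0 \<le> b" "b < m" "0 \<le> j" "j < 3" using assms y unfolding Yp_def by auto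
  let ?p = "((a - fst g) mod k, (b - snd g) mod m, j)"
  have "?p \<in> Yp k m" using r assms unfolding Yp_def by auto
  moreover have "tr k m g ?p = y"
  proof -
    have "((a - fst g) mod k + fst g) mod k = a mod k" by (metis diff_add_cancel mod_add_left_eq)
    moreover have "((b - snd g) mod m + snd g) mod m = b mod m" by (metis diff_add_cancel mod_add_left_eq)
    ultimately show ?thesis unfolding tr_def y using r by simp
  qed
  ultimately show ?thesis by blast
qed

lemma card_Yp: "k > 0 \<Longrightarrow> m > 0 \<Longrightarrow> card (Yp k m) = 3 * nat (k*m)"
  unfolding Yp_def by (simp add: card_cartesian_product nat_mult_distrib)

lemma finite_Yp: "finite (Yp k m)" unfolding Yp_def by simp

definition gidx :: "int \<Rightarrow> nat \<Rightarrow> int \<times> int" where "gidx m c = (int c div m, int c mod m)"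

lemma gidx_range: assumes "m > 0" "k > 0" "c < nat (k*m)"
  shows "0 \<le> fst (gidx m c)" "fst (gidx m c) < k" "0 \<le> snd (gidx m c)" "snd (gidx m c) < m"
proof -
  have c: "int c < k*m" using assms by linarith
  show "0 \<le> fst (gidx m c)" unfolding gidx_def using assms by (simp add: pos_imp_zdiv_nonneg_iff)
  show "fst (gidx m c) < k"
  proof (rule ccontr)
    assume "\<not> fst (gidx m c) < k"
    then have "k \<le> int c div m" unfolding gidx_def by simp
    then have "k * m \<le> int c div m * m" using assms(1) by (simp add: mult_right_mono)
    moreover have "0 \<le> int c mod m" using assms(1) by simp
    moreover have "int c div m * m + int c mod m = int c" by (rule div_mult_mod_eq)
    ultimately show False using c by linarith
  qed
  show "0 \<le> snd (gidx m c)" "snd (gidx m c) < m" unfolding gidx_def using assms by auto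
qed

lemma gidx_inj: assumes "m > 0" "gidx m c = gidx m c'" shows "c = c'"
proof -
  have "int c div m = int c' div m" "int c mod m = int c' mod m" using assms unfolding gidx_def by auto
  then have "int c = int c'" by (metis div_mult_mod_eq)
  then show ?thesis by simp
qed

lemma starter_Qex:
  fixes k m :: int and I :: "'i set" and pt :: "'i \<Rightarrow> nat \<Rightarrow> pnt"
  assumes k0: "k > 0" and m0: "m > 0" and fI: "finite I" and cI: "card I = nat (k*m)"
    and inY: "\<And>i s. i \<in> I \<Longrightarrow> s < 3 \<Longrightarrow> pt i s \<in> Yp k m"
    and injpt: "\<And>i s i' s'. i \<in> I \<Longrightarrow> i' \<in> I \<Longrightarrow> s < 3 \<Longrightarrow> s' < 3 \<Longrightarrow> pt i s = pt i' s' \<Longrightarrow> i = i' \<and> s = s'"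
    and injkey: "\<And>i s t i' s' t'. i \<in> I \<Longrightarrow> i' \<in> I \<Longrightarrow> s < 3 \<Longrightarrow> t < 3 \<Longrightarrow> s' < 3 \<Longrightarrow> t' < 3 \<Longrightarrow>
        s \<noteq> t \<Longrightarrow> s' \<noteq> t' \<Longrightarrow> key k m (pt i s) (pt i t) = key k m (pt i' s') (pt i' t') \<Longrightarrow> i = i' \<and> s = s' \<and> t = t'"
    and iz: "iz \<in> I" and lev0: "\<And>s t. s < 3 \<Longrightarrow> t < 3 \<Longrightarrow> lev (pt iz s) = lev (pt iz t) \<Longrightarrow> s = t"
  shows "Qex (nat (k*m))"
proof -
  let ?N = "nat (k*m)"
  let ?Y = "Yp k m"
  define Tr where "Tr i = pt i ` {..<3}" for i
  define C where "C c = (\<lambda>i. tr k m (gidx m c) ` Tr i) ` I" for c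
  define S where "S c = tr k m (gidx m c) ` Tr iz" for c
  have PTsub: "(\<lambda>(i,s). pt i s) ` (I \<times> {..<3}) \<subseteq> ?Y" using inY by auto
  have PTinj: "inj_on (\<lambda>(i,s). pt i s) (I \<times> {..<3})"
    using injpt by (auto simp: inj_on_def)
  have "card ((\<lambda>(i,s). pt i s) ` (I \<times> {..<3})) = card (I \<times> {..<3::nat})"
    using card_image[OF PTinj] .
  also have "\<dots> = 3 * ?N" using cI fI by (simp add: card_cartesian_product)
  also have "\<dots> = card ?Y" using card_Yp[OF k0 m0] by simp
  finally have PTim: "(\<lambda>(i,s). pt i s) ` (I \<times> {..<3}) = ?Y"
    using card_subset_eq[OF finite_Yp PTsub] by simp
  have preim: "\<exists>i\<in>I. \<exists>s<3. p = pt i s" if "p \<in> ?Y" for p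
    using that PTim by (smt (verit, ccfv_SIG) SigmaE case_prod_conv image_iff lessThan_iff)
  have TrY: "Tr i \<subseteq> ?Y" if "i \<in> I" for i using inY that unfolding Tr_def by auto
  have cTr: "card (Tr i) = 3" if "i \<in> I" for i
  proof -
    have "inj_on (pt i) {..<3}" using injpt that by (auto simp: inj_on_def)
    then show ?thesis unfolding Tr_def by (simp add: card_image)
  qed
  have grange: "0 \<le> fst (gidx m c) \<and> fst (gidx m c) < k \<and> 0 \<le> snd (gidx m c) \<and> snd (gidx m c) < m" if "c < ?N" for c
    using gidx_range[OF m0 k0 that] by simp
  have trinjY: "inj_on (tr k m g) ?Y" for g using tr_inj by (meson inj_onI)
  have "Qs ?Y C ?N"
  proof (rule QsI[where S=S])
    show "finite ?Y" by (rule finite_Yp)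
    show "card ?Y = 3 * ?N" using card_Yp[OF k0 m0] .
  next
    fix c T assume c: "c < ?N" and T: "T \<in> C c"
    then obtain i where i: "i \<in> I" "T = tr k m (gidx m c) ` Tr i" unfolding C_def by auto
    show "T \<subseteq> ?Y" using i TrY tr_in k0 m0 by blast
    show "card T = 3" using i cTr card_image inj_on_subset[OF trinjY TrY] by metis
  next
    fix c assume c: "c < ?N"
    show "\<Union>(C c) = ?Y"
    proof
      show "\<Union>(C c) \<subseteq> ?Y" unfolding C_def using TrY tr_in k0 m0 by blast
    next
      show "?Y \<subseteq> \<Union>(C c)"
      proof
        fix y assume "y \<in> ?Y"
        then obtain p where p: "p \<in> ?Y" "tr k m (gidx m c) p = y" using tr_surj k0 m0 by blast
        then obtain i s where "i \<in> I" "s < 3" "p = pt i s" using preim by blast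
        then have "y \<in> tr k m (gidx m c) ` Tr i" using p unfolding Tr_def by auto
        then show "y \<in> \<Union>(C c)" unfolding C_def using \<open>i \<in> I\<close> by blast
      qed
    qed
  next
    fix c T T' assume c: "c < ?N" and T: "T \<in> C c" and T': "T' \<in> C c" and ne: "T \<noteq> T'"
    obtain i where i: "i \<in> I" "T = tr k m (gidx m c) ` Tr i" using T unfolding C_def by auto
    obtain i' where i': "i' \<in> I" "T' = tr k m (gidx m c) ` Tr i'" using T' unfolding C_def by auto
    show "T \<inter> T' = {}"
    proof (rule ccontr)
      assume "T \<inter> T' \<noteq> {}"
      then obtain y where "y \<in> T" "y \<in> T'" by blast
      then obtain s s' where s: "s < 3" "s' < 3" "y = tr k m (gidx m c) (pt i s)" "y = tr k m (gidx m c) (pt i' s')"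
        using i i' unfolding Tr_def by auto
      then have "pt i s = pt i' s'" using tr_inj inY i i' by metis
      then have "i = i'" using injpt i i' s by blast
      then show False using ne i i' by simp
    qed
  next
    fix c c' T T' assume c: "c < ?N" "c' < ?N" and T: "T \<in> C c" and T': "T' \<in> C c'" and ne: "c \<noteq> c' \<or> T \<noteq> T'"
    obtain i where i: "i \<in> I" "T = tr k m (gidx m c) ` Tr i" using T unfolding C_def by auto
    obtain i' where i': "i' \<in> I" "T' = tr k m (gidx m c') ` Tr i'" using T' unfolding C_def by auto
    show "card (T \<inter> T') \<le> 1"
    proof (rule card_le1I)
      show "finite (T \<inter> T')" using i unfolding Tr_def by simp
    next
      fix y1 y2 assume y1: "y1 \<in> T \<inter> T'" and y2: "y2 \<in> T \<inter> T'"
      show "y1 = y2"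
      proof (rule ccontr)
        assume ne12: "y1 \<noteq> y2"
        obtain s1 where s1: "s1 < 3" "y1 = tr k m (gidx m c) (pt i s1)" using y1 i unfolding Tr_def by auto
        obtain s2 where s2: "s2 < 3" "y2 = tr k m (gidx m c) (pt i s2)" using y2 i unfolding Tr_def by auto
        obtain s1' where s1': "s1' < 3" "y1 = tr k m (gidx m c') (pt i' s1')" using y1 i' unfolding Tr_def by auto
        obtain s2' where s2': "s2' < 3" "y2 = tr k m (gidx m c') (pt i' s2')" using y2 i' unfolding Tr_def by auto
        have "s1 \<noteq> s2" using ne12 s1 s2 by auto
        have "s1' \<noteq> s2'" using ne12 s1' s2' by auto
        have "key k m (pt i s1) (pt i s2) = key k m y1 y2" using s1 s2 key_tr by metis
        also have "\<dots> = key k m (pt i' s1') (pt i' s2')" using s1' s2' key_tr by metis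
        finally have "i = i' \<and> s1 = s1' \<and> s2 = s2'"
          using injkey[OF i(1) i'(1) s1(1) s2(1) s1'(1) s2'(1) \<open>s1 \<noteq> s2\<close> \<open>s1' \<noteq> s2'\<close>] by blast
        then have ii: "i = i'" and "tr k m (gidx m c) (pt i s1) = tr k m (gidx m c') (pt i s1)" using s1 s1' by auto
        then have "gidx m c = gidx m c'"
          using tr_g_inj[OF inY[OF i(1) s1(1)]] grange[OF c(1)] grange[OF c(2)] by blast
        then have "c = c'" using gidx_inj m0 by blast
        then show False using ne i i' ii by simp
      qed
    qed
  next
    fix c assume c: "c < ?N"
    show "S c \<in> C c" unfolding S_def C_def using iz by blast
  next
    fix c c' assume c: "c < ?N" "c' < ?N" "c \<noteq> c'"
    show "S c \<inter> S c' = {}"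
    proof (rule ccontr)
      assume "S c \<inter> S c' \<noteq> {}"
      then obtain y where "y \<in> S c" "y \<in> S c'" by blast
      then obtain s s' where s: "s < 3" "s' < 3" "y = tr k m (gidx m c) (pt iz s)" "y = tr k m (gidx m c') (pt iz s')"
        unfolding S_def Tr_def by auto
      then have "lev (pt iz s) = lev (pt iz s')" by (metis lev_tr)
      then have "s = s'" using lev0 s by blast
      then have "gidx m c = gidx m c'"
        using s tr_g_inj[OF inY[OF iz s(1)]] grange[OF c(1)] grange[OF c(2)] by metis
      then show False using gidx_inj m0 c by blast
    qed
  qed
  then show ?thesis by (rule Qex_of_Qs)
qed


definition inYp :: "int \<Rightarrow> int \<Rightarrow> pnt \<Rightarrow> bool" where
  "inYp k m p = (case p of (a,b,j) \<Rightarrow> 0 \<le> a \<and> a < k \<and> 0 \<le> b \<and> b < m \<and> 0 \<le> j \<and> j < 3)"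

lemma inYp_iff: "inYp k m p \<longleftrightarrow> p \<in> Yp k m"
  unfolding inYp_def Yp_def by (cases p) auto

definition sel3 :: "pnt \<times> pnt \<times> pnt \<Rightarrow> nat \<Rightarrow> pnt" where
  "sel3 T s = (case T of (a,b,c) \<Rightarrow> if s = 0 then a else if s = 1 then b else c)"

definition prs :: "(nat \<times> nat) list" where "prs = [(0,1),(1,0),(0,2),(2,0),(1,2),(2,1)]"

definition lpt :: "(pnt \<times> pnt \<times> pnt) list \<Rightarrow> nat \<Rightarrow> nat \<Rightarrow> pnt" where
  "lpt L i s = sel3 (L ! i) s"

definition chk :: "int \<Rightarrow> int \<Rightarrow> (pnt \<times> pnt \<times> pnt) list \<Rightarrow> bool" where
  "chk k m L \<longleftrightarrow> length L = nat (k*m) \<and>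
     list_all (\<lambda>x. inYp k m (lpt L (x div 3) (x mod 3))) [0..<3 * length L] \<and>
     distinct (map (\<lambda>x. lpt L (x div 3) (x mod 3)) [0..<3 * length L]) \<and>
     distinct (map (\<lambda>x. key k m (lpt L (x div 6) (fst (prs ! (x mod 6)))) (lpt L (x div 6) (snd (prs ! (x mod 6))))) [0..<6 * length L]) \<and>
     (\<exists>i\<in>set [0..<length L]. lev (lpt L i 0) \<noteq> lev (lpt L i 1) \<and> lev (lpt L i 0) \<noteq> lev (lpt L i 2) \<and> lev (lpt L i 1) \<noteq> lev (lpt L i 2))"

lemma prs_ex: "s < 3 \<Longrightarrow> t < 3 \<Longrightarrow> s \<noteq> t \<Longrightarrow> \<exists>r<6. prs ! r = (s,t)"
proof -
  assume a: "s < 3" "t < 3" "s \<noteq> t"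
  have "s = 0 \<or> s = 1 \<or> s = 2" "t = 0 \<or> t = 1 \<or> t = 2" using a by linarith+
  then have "(s,t) \<in> set prs" using a(3) unfolding prs_def by auto
  then obtain r where "r < length prs" "prs ! r = (s,t)" by (meson in_set_conv_nth)
  moreover have "length prs = 6" unfolding prs_def by simp
  ultimately show ?thesis by auto
qed

lemma chk_Qex:
  assumes c: "chk k m L" and k0: "k > 0" and m0: "m > 0"
  shows "Qex (nat (k*m))"
proof -
  let ?n = "length L"
  have len: "?n = nat (k*m)" using c unfolding chk_def by simp
  have inY: "\<And>x. x < 3 * ?n \<Longrightarrow> inYp k m (lpt L (x div 3) (x mod 3))"
    using c unfolding chk_def by (simp add: list_all_iff)
  have d1: "distinct (map (\<lambda>x. lpt L (x div 3) (x mod 3)) [0..<3 * ?n])" using c unfolding chk_def by (elim conjE) assumption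
  have d2: "distinct (map (\<lambda>x. key k m (lpt L (x div 6) (fst (prs ! (x mod 6)))) (lpt L (x div 6) (snd (prs ! (x mod 6))))) [0..<6 * ?n])"
    using c unfolding chk_def by (elim conjE) assumption
  obtain i0 where i0: "i0 < ?n" "lev (lpt L i0 0) \<noteq> lev (lpt L i0 1)" "lev (lpt L i0 0) \<noteq> lev (lpt L i0 2)" "lev (lpt L i0 1) \<noteq> lev (lpt L i0 2)"
    using c unfolding chk_def by auto
  have inj1: "inj_on (\<lambda>x. lpt L (x div 3) (x mod 3)) {0..<3 * ?n}"
    using d1 by (simp add: distinct_map)
  have inj2: "inj_on (\<lambda>x. key k m (lpt L (x div 6) (fst (prs ! (x mod 6)))) (lpt L (x div 6) (snd (prs ! (x mod 6))))) {0..<6 * ?n}"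
    using d2 by (simp add: distinct_map)
  show ?thesis
  proof (rule starter_Qex[where I="{..<?n}" and pt="lpt L" and iz=i0])
    show "k > 0" "m > 0" by fact+
    show "finite {..<?n}" by simp
    show "card {..<?n} = nat (k*m)" using len by simp
  next
    fix i s assume "i \<in> {..<?n}" "s < (3::nat)"
    then have "3*i + s < 3 * ?n" by simp
    then have "inYp k m (lpt L ((3*i+s) div 3) ((3*i+s) mod 3))" using inY by blast
    then show "lpt L i s \<in> Yp k m" using \<open>s < 3\<close> by (simp add: inYp_iff)
  next
    fix i s i' s' assume a: "i \<in> {..<?n}" "i' \<in> {..<?n}" "s < (3::nat)" "s' < (3::nat)" "lpt L i s = lpt L i' s'"
    have "3*i+s \<in> {0..<3*?n}" "3*i'+s' \<in> {0..<3*?n}" using a by auto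
    moreover have "lpt L ((3*i+s) div 3) ((3*i+s) mod 3) = lpt L ((3*i'+s') div 3) ((3*i'+s') mod 3)"
      using a by simp
    ultimately have "3*i+s = 3*i'+s'" using inj1 by (meson inj_onD)
    then show "i = i' \<and> s = s'" using a by presburger
  next
    fix i s t i' s' t' assume a: "i \<in> {..<?n}" "i' \<in> {..<?n}" "s < (3::nat)" "t < (3::nat)" "s' < (3::nat)" "t' < (3::nat)"
      "s \<noteq> t" "s' \<noteq> t'" "key k m (lpt L i s) (lpt L i t) = key k m (lpt L i' s') (lpt L i' t')"
    obtain r where r: "r < 6" "prs ! r = (s,t)" using prs_ex a by blast
    obtain r' where r': "r' < 6" "prs ! r' = (s',t')" using prs_ex a by blast
    have "6*i+r \<in> {0..<6*?n}" "6*i'+r' \<in> {0..<6*?n}" using a r r' by auto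
    moreover have "(\<lambda>x. key k m (lpt L (x div 6) (fst (prs ! (x mod 6)))) (lpt L (x div 6) (snd (prs ! (x mod 6))))) (6*i+r)
       = (\<lambda>x. key k m (lpt L (x div 6) (fst (prs ! (x mod 6)))) (lpt L (x div 6) (snd (prs ! (x mod 6))))) (6*i'+r')"
      using a r r' by simp
    ultimately have "6*i+r = 6*i'+r'" using inj2 by (meson inj_onD)
    then have "i = i'" "r = r'" using r r' by presburger+
    then show "i = i' \<and> s = s' \<and> t = t'" using r r' by simp
  next
    show "i0 \<in> {..<?n}" using i0 by simp
  next
    fix s t assume "s < (3::nat)" "t < (3::nat)" "lev (lpt L i0 s) = lev (lpt L i0 t)"
    moreover have "s = 0 \<or> s = 1 \<or> s = 2" "t = 0 \<or> t = 1 \<or> t = 2" using \<open>s < 3\<close> \<open>t < 3\<close> by linarith+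
    ultimately show "s = t" using i0 by fastforce
  qed
qed


definition st6 :: "(pnt \<times> pnt \<times> pnt) list" where "st6 = [((0,0,0),(0,0,1),(0,0,2)), ((0,5,1),(0,4,1),(0,3,0)), ((0,3,1),(0,2,2),(0,1,1)), ((0,4,2),(0,5,2),(0,1,0)), ((0,2,0),(0,3,2),(0,1,2)), ((0,5,0),(0,2,1),(0,4,0))]"

definition st8 :: "(pnt \<times> pnt \<times> pnt) list" where "st8 = [((0,0,0),(0,0,1),(0,0,2)), ((0,6,1),(0,7,0),(0,5,0)), ((0,1,2),(0,4,2),(0,3,0)), ((0,6,0),(0,2,2),(0,4,1)), ((0,3,1),(0,1,0),(0,5,1)), ((0,6,2),(0,4,0),(0,7,1)), ((0,5,2),(0,2,0),(0,7,2)), ((0,2,1),(0,3,2),(0,1,1))]"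

definition st10 :: "(pnt \<times> pnt \<times> pnt) list" where "st10 = [((0,0,0),(0,0,1),(0,0,2)), ((0,3,0),(0,8,1),(0,5,0)), ((0,7,1),(0,9,2),(0,6,0)), ((0,7,0),(0,3,2),(0,4,2)), ((0,6,2),(0,2,0),(0,1,1)), ((0,4,1),(0,8,0),(0,7,2)), ((0,5,2),(0,9,1),(0,8,2)), ((0,1,2),(0,9,0),(0,3,1)), ((0,4,0),(0,2,2),(0,1,0)), ((0,5,1),(0,6,1),(0,2,1))]"

definition st12 :: "(pnt \<times> pnt \<times> pnt) list" where "st12 = [((0,0,0),(0,0,1),(0,0,2)), ((0,7,1),(0,5,0),(0,2,2)), ((0,2,1),(0,6,2),(0,1,2)), ((0,9,1),(0,8,0),(0,7,2)), ((0,10,1),(0,7,0),(0,2,0)), ((0,5,1),(0,1,0),(0,8,2)), ((0,9,2),(0,4,0),(0,10,2)), ((0,10,0),(0,8,1),(0,11,0)), ((0,1,1),(0,11,1),(0,4,1)), ((0,11,2),(0,3,2),(0,6,1)), ((0,4,2),(0,3,0),(0,6,0)), ((0,3,1),(0,9,0),(0,5,2))]"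

definition st14 :: "(pnt \<times> pnt \<times> pnt) list" where "st14 = [((0,0,0),(0,0,1),(0,0,2)), ((0,8,2),(0,7,2),(0,2,1)), ((0,11,0),(0,6,0),(0,12,1)), ((0,5,2),(0,9,1),(0,11,1)), ((0,9,2),(0,7,0),(0,3,2)), ((0,6,1),(0,9,0),(0,10,2)), ((0,4,1),(0,1,1),(0,2,0)), ((0,7,1),(0,2,2),(0,4,2)), ((0,12,0),(0,8,0),(0,1,2)), ((0,5,0),(0,13,2),(0,4,0)), ((0,1,0),(0,13,1),(0,3,0)), ((0,10,0),(0,3,1),(0,13,0)), ((0,11,2),(0,6,2),(0,8,1)), ((0,12,2),(0,5,1),(0,10,1))]"

definition st15 :: "(pnt \<times> pnt \<times> pnt) list" where "st15 = [((0,0,0),(0,0,1),(0,0,2)), ((0,1,0),(0,14,1),(0,7,2)), ((0,4,2),(0,12,0),(0,5,1)), ((0,9,2),(0,10,0),(0,8,2)), ((0,6,1),(0,14,0),(0,13,1)), ((0,11,0),(0,14,2),(0,13,0)), ((0,7,0),(0,12,2),(0,3,0)), ((0,13,2),(0,3,1),(0,10,2)), ((0,11,2),(0,8,1),(0,5,2)), ((0,6,0),(0,3,2),(0,1,2)), ((0,5,0),(0,2,0),(0,11,1)), ((0,9,0),(0,8,0),(0,10,1)), ((0,6,2),(0,4,1),(0,2,2)), ((0,12,1),(0,2,1),(0,1,1)), ((0,4,0),(0,7,1),(0,9,1))]"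

definition st18 :: "(pnt \<times> pnt \<times> pnt) list" where "st18 = [((0,0,0),(0,0,1),(0,0,2)), ((0,11,1),(0,8,2),(0,9,0)), ((0,12,0),(0,9,2),(0,13,1)), ((0,4,2),(0,14,0),(0,5,2)), ((0,7,2),(0,15,0),(0,13,0)), ((0,15,1),(0,2,1),(0,10,2)), ((0,7,0),(0,5,1),(0,6,1)), ((0,5,0),(0,17,0),(0,10,0)), ((0,2,2),(0,1,1),(0,16,0)), ((0,1,0),(0,16,1),(0,2,0)), ((0,15,2),(0,17,2),(0,10,1)), ((0,17,1),(0,11,2),(0,9,1)), ((0,4,0),(0,14,1),(0,8,1)), ((0,6,2),(0,3,1),(0,1,2)), ((0,11,0),(0,16,2),(0,12,2)), ((0,3,0),(0,6,0),(0,12,1)), ((0,14,2),(0,3,2),(0,8,0)), ((0,13,2),(0,4,1),(0,7,1))]"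

definition st21 :: "(pnt \<times> pnt \<times> pnt) list" where "st21 = [((0,0,0),(0,0,1),(0,0,2)), ((0,11,2),(0,5,0),(0,14,2)), ((0,20,1),(0,7,1),(0,2,1)), ((0,3,0),(0,7,0),(0,1,2)), ((0,18,2),(0,15,0),(0,17,1)), ((0,12,1),(0,14,0),(0,6,2)), ((0,16,2),(0,17,0),(0,5,1)), ((0,6,1),(0,9,2),(0,4,1)), ((0,2,2),(0,4,2),(0,11,1)), ((0,7,2),(0,9,1),(0,10,1)), ((0,8,1),(0,9,0),(0,19,0)), ((0,12,0),(0,4,0),(0,6,0)), ((0,15,2),(0,13,1),(0,8,0)), ((0,19,2),(0,10,2),(0,2,0)), ((0,1,0),(0,18,1),(0,13,2)), ((0,19,1),(0,11,0),(0,16,0)), ((0,20,2),(0,10,0),(0,5,2)), ((0,20,0),(0,17,2),(0,3,2)), ((0,15,1),(0,18,0),(0,1,1)), ((0,14,1),(0,13,0),(0,3,1)), ((0,16,1),(0,8,2),(0,12,2))]"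

definition st22 :: "(pnt \<times> pnt \<times> pnt) list" where "st22 = [((0,0,0),(0,0,1),(0,0,2)), ((0,4,2),(0,21,0),(0,12,1)), ((0,14,1),(0,16,2),(0,13,0)), ((0,8,2),(0,5,1),(0,10,1)), ((0,7,0),(0,19,1),(0,15,2)), ((0,20,1),(0,9,0),(0,16,0)), ((0,2,1),(0,11,2),(0,18,0)), ((0,6,1),(0,10,0),(0,17,2)), ((0,1,1),(0,13,1),(0,8,0)), ((0,14,2),(0,3,0),(0,20,0)), ((0,11,1),(0,19,2),(0,5,2)), ((0,7,2),(0,13,2),(0,9,2)), ((0,11,0),(0,14,0),(0,1,2)), ((0,4,1),(0,3,2),(0,10,2)), ((0,7,1),(0,3,1),(0,5,0)), ((0,12,0),(0,2,0),(0,4,0)), ((0,1,0),(0,17,0),(0,9,1)), ((0,15,0),(0,18,1),(0,6,2)), ((0,21,1),(0,15,1),(0,8,1)), ((0,12,2),(0,2,2),(0,17,1)), ((0,16,1),(0,6,0),(0,20,2)), ((0,18,2),(0,21,2),(0,19,0))]"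

definition st26 :: "(pnt \<times> pnt \<times> pnt) list" where "st26 = [((0,0,0),(0,0,1),(0,0,2)), ((0,5,1),(0,24,0),(0,22,0)), ((0,14,1),(0,4,0),(0,17,2)), ((0,11,1),(0,23,2),(0,12,1)), ((0,11,0),(0,17,1),(0,1,1)), ((0,25,2),(0,3,2),(0,5,0)), ((0,11,2),(0,24,1),(0,19,0)), ((0,16,1),(0,18,1),(0,22,1)), ((0,1,0),(0,4,2),(0,13,0)), ((0,18,0),(0,2,0),(0,21,0)), ((0,8,0),(0,7,0),(0,15,2)), ((0,5,2),(0,12,0),(0,10,1)), ((0,14,2),(0,4,1),(0,9,2)), ((0,2,2),(0,19,2),(0,1,2)), ((0,24,2),(0,9,0),(0,8,1)), ((0,14,0),(0,18,2),(0,25,1)), ((0,10,0),(0,16,0),(0,12,2)), ((0,15,0),(0,19,1),(0,7,1)), ((0,6,1),(0,8,2),(0,9,1)), ((0,15,1),(0,6,2),(0,20,0)), ((0,21,1),(0,3,1),(0,10,2)), ((0,25,0),(0,3,0),(0,13,2)), ((0,20,2),(0,2,1),(0,23,1)), ((0,23,0),(0,20,1),(0,6,0)), ((0,22,2),(0,16,2),(0,17,0)), ((0,7,2),(0,13,1),(0,21,2))]"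

definition st27 :: "(pnt \<times> pnt \<times> pnt) list" where "st27 = [((0,0,0),(0,0,1),(0,0,2)), ((0,24,0),(0,15,2),(0,8,2)), ((0,21,1),(0,15,1),(0,10,0)), ((0,26,0),(0,2,1),(0,20,1)), ((0,21,2),(0,22,0),(0,3,1)), ((0,9,0),(0,1,0),(0,14,0)), ((0,22,2),(0,4,2),(0,18,1)), ((0,17,1),(0,10,1),(0,13,0)), ((0,6,2),(0,23,1),(0,12,1)), ((0,11,0),(0,25,1),(0,12,0)), ((0,8,0),(0,4,1),(0,10,2)), ((0,23,0),(0,26,2),(0,6,0)), ((0,14,1),(0,13,2),(0,1,2)), ((0,7,1),(0,2,2),(0,5,0)), ((0,12,2),(0,20,2),(0,7,2)), ((0,5,2),(0,16,0),(0,18,0)), ((0,7,0),(0,17,2),(0,19,1)), ((0,9,2),(0,21,0),(0,11,2)), ((0,2,0),(0,1,1),(0,25,2)), ((0,15,0),(0,24,2),(0,8,1)), ((0,19,2),(0,23,2),(0,16,1)), ((0,25,0),(0,13,1),(0,3,2)), ((0,3,0),(0,19,0),(0,9,1)), ((0,20,0),(0,18,2),(0,17,0)), ((0,16,2),(0,11,1),(0,24,1)), ((0,4,0),(0,26,1),(0,22,1)), ((0,5,1),(0,14,2),(0,6,1))]"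

lemma chk6: "chk 1 6 st6" by code_simp
lemma Qex6: "Qex 6" using chk_Qex[OF chk6] by simp
lemma chk8: "chk 1 8 st8" by code_simp
lemma Qex8: "Qex 8" using chk_Qex[OF chk8] by simp
lemma chk10: "chk 1 10 st10" by code_simp
lemma Qex10: "Qex 10" using chk_Qex[OF chk10] by simp
lemma chk12: "chk 1 12 st12" by code_simp
lemma Qex12: "Qex 12" using chk_Qex[OF chk12] by simp
lemma chk14: "chk 1 14 st14" by code_simp
lemma Qex14: "Qex 14" using chk_Qex[OF chk14] by simp
lemma chk15: "chk 1 15 st15" by code_simp
lemma Qex15: "Qex 15" using chk_Qex[OF chk15] by simp
lemma chk18: "chk 1 18 st18" by code_simp
lemma Qex18: "Qex 18" using chk_Qex[OF chk18] by simp
lemma chk21: "chk 1 21 st21" by code_simp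
lemma Qex21: "Qex 21" using chk_Qex[OF chk21] by simp
lemma chk22: "chk 1 22 st22" by code_simp
lemma Qex22: "Qex 22" using chk_Qex[OF chk22] by simp
lemma chk26: "chk 1 26 st26" by code_simp
lemma Qex26: "Qex 26" using chk_Qex[OF chk26] by simp
lemma chk27: "chk 1 27 st27" by code_simp
lemma Qex27: "Qex 27" using chk_Qex[OF chk27] by simp


definition OA4T :: "nat \<Rightarrow> (nat \<Rightarrow> nat \<Rightarrow> nat \<Rightarrow> nat) \<Rightarrow> (nat \<Rightarrow> nat) \<Rightarrow> bool" where
 "OA4T b col t \<longleftrightarrow>
   (\<forall>j\<in>set [0..<3]. \<forall>c\<in>set [0..<b]. \<forall>x\<in>set [0..<b]. col j c x < b) \<and>
   (\<forall>j\<in>set [0..<3]. \<forall>c\<in>set [0..<b]. \<forall>x\<in>set [0..<b]. \<forall>x'\<in>set [0..<b]. col j c x = col j c x' \<longrightarrow> x = x') \<and>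
   (\<forall>j1\<in>set [0..<3]. \<forall>j2\<in>set [0..<3]. j1 \<noteq> j2 \<longrightarrow> (\<forall>c\<in>set [0..<b]. \<forall>x\<in>set [0..<b]. \<forall>c'\<in>set [0..<b]. \<forall>x'\<in>set [0..<b].
       col j1 c x = col j1 c' x' \<and> col j2 c x = col j2 c' x' \<longrightarrow> c = c' \<and> x = x')) \<and>
   (\<forall>c\<in>set [0..<b]. t c < b) \<and>
   (\<forall>j\<in>set [0..<3]. \<forall>c\<in>set [0..<b]. \<forall>c'\<in>set [0..<b]. col j c (t c) = col j c' (t c') \<longrightarrow> c = c')"

context fixes b col t assumes O: "OA4T b col t" begin
lemma upt_mem: "x < n \<Longrightarrow> x \<in> set [0..<n]" by simp
lemma OA_range: assumes "j < 3" "c < b" "x < b" shows "col j c x < b"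
proof -
  have h: "\<forall>j\<in>set [0..<3]. \<forall>c\<in>set [0..<b]. \<forall>x\<in>set [0..<b]. col j c x < b"
    using O unfolding OA4T_def by (elim conjE) assumption
  show ?thesis using bspec[OF bspec[OF bspec[OF h upt_mem[OF assms(1)]] upt_mem[OF assms(2)]] upt_mem[OF assms(3)]] .
qed
lemma OA_inj: assumes "j < 3" "c < b" "x < b" "x' < b" "col j c x = col j c x'" shows "x = x'"
proof -
  have h: "\<forall>j\<in>set [0..<3]. \<forall>c\<in>set [0..<b]. \<forall>x\<in>set [0..<b]. \<forall>x'\<in>set [0..<b]. col j c x = col j c x' \<longrightarrow> x = x'"
    using O unfolding OA4T_def by (elim conjE) assumption
  show ?thesis using bspec[OF bspec[OF bspec[OF bspec[OF h upt_mem[OF assms(1)]] upt_mem[OF assms(2)]] upt_mem[OF assms(3)]] upt_mem[OF assms(4)]] assms(5) by blast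
qed
lemma OA_orth: assumes "j1 < 3" "j2 < 3" "j1 \<noteq> j2" "c < b" "x < b" "c' < b" "x' < b"
   "col j1 c x = col j1 c' x'" "col j2 c x = col j2 c' x'" shows "c = c' \<and> x = x'"
proof -
  have h: "\<forall>j1\<in>set [0..<3]. \<forall>j2\<in>set [0..<3]. j1 \<noteq> j2 \<longrightarrow> (\<forall>c\<in>set [0..<b]. \<forall>x\<in>set [0..<b]. \<forall>c'\<in>set [0..<b]. \<forall>x'\<in>set [0..<b].
       col j1 c x = col j1 c' x' \<and> col j2 c x = col j2 c' x' \<longrightarrow> c = c' \<and> x = x')"
    using O unfolding OA4T_def by (elim conjE) assumption
  have "j1 \<noteq> j2 \<longrightarrow> (\<forall>c\<in>set [0..<b]. \<forall>x\<in>set [0..<b]. \<forall>c'\<in>set [0..<b]. \<forall>x'\<in>set [0..<b].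
       col j1 c x = col j1 c' x' \<and> col j2 c x = col j2 c' x' \<longrightarrow> c = c' \<and> x = x')"
    using bspec[OF bspec[OF h upt_mem[OF assms(1)]] upt_mem[OF assms(2)]] .
  then have "\<forall>c\<in>set [0..<b]. \<forall>x\<in>set [0..<b]. \<forall>c'\<in>set [0..<b]. \<forall>x'\<in>set [0..<b].
       col j1 c x = col j1 c' x' \<and> col j2 c x = col j2 c' x' \<longrightarrow> c = c' \<and> x = x'" using assms(3) by blast
  from bspec[OF bspec[OF bspec[OF bspec[OF this upt_mem[OF assms(4)]] upt_mem[OF assms(5)]] upt_mem[OF assms(6)]] upt_mem[OF assms(7)]]
  show ?thesis using assms(8,9) by blast
qed
lemma OA_t: assumes "c < b" shows "t c < b"
proof -
  have h: "\<forall>c\<in>set [0..<b]. t c < b" using O unfolding OA4T_def by (elim conjE) assumption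
  show ?thesis using bspec[OF h upt_mem[OF assms]] .
qed
lemma OA_tinj: assumes "j < 3" "c < b" "c' < b" "col j c (t c) = col j c' (t c')" shows "c = c'"
proof -
  have h: "\<forall>j\<in>set [0..<3]. \<forall>c\<in>set [0..<b]. \<forall>c'\<in>set [0..<b]. col j c (t c) = col j c' (t c') \<longrightarrow> c = c'"
    using O unfolding OA4T_def by (elim conjE) assumption
  show ?thesis using bspec[OF bspec[OF bspec[OF h upt_mem[OF assms(1)]] upt_mem[OF assms(2)]] upt_mem[OF assms(3)]] assms(4) by blast
qed
lemma OA_surj: assumes "j < 3" "c < b" "z < b" shows "\<exists>x<b. col j c x = z"
proof -
  have inj: "inj_on (col j c) {..<b}" using OA_inj assms by (meson inj_onI lessThan_iff)
  have sub: "col j c ` {..<b} \<subseteq> {..<b}" using OA_range assms by auto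
  have "card (col j c ` {..<b}) = card {..<b}" using card_image[OF inj] .
  then have "col j c ` {..<b} = {..<b}" using card_subset_eq[OF _ sub] by simp
  then show ?thesis using assms(3) by (metis imageE lessThan_iff)
qed
end

definition ordT :: "nat set \<Rightarrow> nat \<Rightarrow> nat" where "ordT T j = sorted_list_of_set T ! j"

lemma ordT_props:
  assumes "finite T" "card T = 3"
  shows "\<And>j. j < 3 \<Longrightarrow> ordT T j \<in> T"
    and "\<And>j j'. j < 3 \<Longrightarrow> j' < 3 \<Longrightarrow> ordT T j = ordT T j' \<Longrightarrow> j = j'"
    and "\<And>y. y \<in> T \<Longrightarrow> \<exists>j<3. ordT T j = y"
proof -
  let ?l = "sorted_list_of_set T"
  have len: "length ?l = 3" using assms by simp
  have st: "set ?l = T" using assms by simp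
  have di: "distinct ?l" by simp
  show "\<And>j. j < 3 \<Longrightarrow> ordT T j \<in> T" unfolding ordT_def using len st by (metis nth_mem)
  show "\<And>j j'. j < 3 \<Longrightarrow> j' < 3 \<Longrightarrow> ordT T j = ordT T j' \<Longrightarrow> j = j'"
    unfolding ordT_def using len di nth_eq_iff_index_eq by metis
  show "\<And>y. y \<in> T \<Longrightarrow> \<exists>j<3. ordT T j = y" unfolding ordT_def using len st by (metis in_set_conv_nth)
qed

lemma product_Qex:
  assumes Qa: "Qex a" and O: "OA4T b col t" and b0: "b > 0"
  shows "Qex (a*b)"
proof -
  obtain Y :: "nat set" and C where Q: "Qs Y C a" using Qa unfolding Qex_def by blast
  obtain S where S1: "\<forall>i<a. S i \<in> C i" and S2: "\<forall>i<a. \<forall>j<a. i \<noteq> j \<longrightarrow> S i \<inter> S j = {}"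
    using Qs_S[OF Q] by blast
  have fY: "finite Y" using Qs_finite[OF Q] .
  have Tfin: "finite T" if "i < a" "T \<in> C i" for i T using Qs_sub[OF Q that] fY by (rule finite_subset)
  have T3: "card T = 3" if "i < a" "T \<in> C i" for i T using Qs_card3[OF Q that] .
  have ordP1: "ordT T j \<in> T" if "i < a" "T \<in> C i" "j < 3" for i T j
    using ordT_props(1)[OF Tfin[OF that(1,2)] T3[OF that(1,2)] that(3)] .
  have ordP2: "j = j'" if "i < a" "T \<in> C i" "j < 3" "j' < 3" "ordT T j = ordT T j'" for i T j j'
    using ordT_props(2)[OF Tfin[OF that(1,2)] T3[OF that(1,2)] that(3,4,5)] .
  have ordP3: "\<exists>j<3. ordT T j = y" if "i < a" "T \<in> C i" "y \<in> T" for i T y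
    using ordT_props(3)[OF Tfin[OF that(1,2)] T3[OF that(1,2)] that(3)] .
  define blow where "blow T c x = (\<lambda>j. (ordT T j, col j c x)) ` {..<3}" for T c x
  define C' where "C' d = {blow T (d mod b) x | T x. T \<in> C (d div b) \<and> x < b}" for d
  define S' where "S' d = blow (S (d div b)) (d mod b) (t (d mod b))" for d
  have dd: "d div b < a" "d mod b < b" if "d < a*b" for d using that b0
    by (simp_all add: less_mult_imp_div_less mult.commute)
  have blowfst: "fst ` blow T c x = T" if "i < a" "T \<in> C i" for i T c x
  proof -
    have "fst ` blow T c x = ordT T ` {..<3}" unfolding blow_def by (simp add: image_image)
    also have "\<dots> = T" using ordP1[OF that] ordP3[OF that] by fastforce
    finally show ?thesis .
  qed
  have memblow: "p \<in> blow T c x \<longleftrightarrow> (\<exists>j<3. p = (ordT T j, col j c x))" for p T c x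
    unfolding blow_def by auto
  have "Qs (Y \<times> {..<b}) C' (a*b)"
  proof (rule QsI[where S=S'])
    show "finite (Y \<times> {..<b})" using fY by simp
    show "card (Y \<times> {..<b}) = 3 * (a*b)" using Qs_card[OF Q] by (simp add: card_cartesian_product)
  next
    fix d B assume d: "d < a*b" and B: "B \<in> C' d"
    then obtain T x where Tx: "T \<in> C (d div b)" "x < b" "B = blow T (d mod b) x" unfolding C'_def by auto
    note i = dd[OF d]
    show "B \<subseteq> Y \<times> {..<b}"
    proof
      fix p assume "p \<in> B"
      then obtain j where j: "j < 3" "p = (ordT T j, col j (d mod b) x)" using Tx memblow by blast
      have "ordT T j \<in> Y" using ordP1[OF i(1) Tx(1) j(1)] Qs_sub[OF Q i(1) Tx(1)] by blast
      moreover have "col j (d mod b) x < b" using OA_range[OF O j(1) i(2) Tx(2)] .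
      ultimately show "p \<in> Y \<times> {..<b}" using j by simp
    qed
    have "inj_on (\<lambda>j. (ordT T j, col j (d mod b) x)) {..<3}"
      using ordP2[OF i(1) Tx(1)] by (auto simp: inj_on_def)
    then show "card B = 3" using Tx unfolding blow_def by (simp add: card_image)
  next
    fix d assume d: "d < a*b"
    note i = dd[OF d]
    show "\<Union>(C' d) = Y \<times> {..<b}"
    proof
      show "\<Union>(C' d) \<subseteq> Y \<times> {..<b}"
      proof
        fix p assume "p \<in> \<Union>(C' d)"
        then obtain T x where Tx: "T \<in> C (d div b)" "x < b" "p \<in> blow T (d mod b) x" unfolding C'_def by auto
        then obtain j where j: "j < 3" "p = (ordT T j, col j (d mod b) x)" using memblow by blast
        have "ordT T j \<in> Y" using ordP1[OF i(1) Tx(1) j(1)] Qs_sub[OF Q i(1) Tx(1)] by blast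
        then show "p \<in> Y \<times> {..<b}" using j OA_range[OF O j(1) i(2) Tx(2)] by simp
      qed
    next
      show "Y \<times> {..<b} \<subseteq> \<Union>(C' d)"
      proof
        fix p assume p: "p \<in> Y \<times> {..<b}"
        obtain y z where yz: "p = (y,z)" "y \<in> Y" "z < b" using p by auto
        have "y \<in> \<Union>(C (d div b))" using Qs_Union[OF Q i(1)] yz by simp
        then obtain T where T: "T \<in> C (d div b)" "y \<in> T" by blast
        obtain j where j: "j < 3" "ordT T j = y" using ordP3[OF i(1) T(1) T(2)] by blast
        obtain x where x: "x < b" "col j (d mod b) x = z" using OA_surj[OF O j(1) i(2) yz(3)] by blast
        have "p \<in> blow T (d mod b) x" using j x yz memblow by auto
        then show "p \<in> \<Union>(C' d)" unfolding C'_def using T x by blast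
      qed
    qed
  next
    fix d B B' assume d: "d < a*b" and B: "B \<in> C' d" and B': "B' \<in> C' d" and ne: "B \<noteq> B'"
    note i = dd[OF d]
    obtain T x where Tx: "T \<in> C (d div b)" "x < b" "B = blow T (d mod b) x" using B unfolding C'_def by auto
    obtain T' x' where Tx': "T' \<in> C (d div b)" "x' < b" "B' = blow T' (d mod b) x'" using B' unfolding C'_def by auto
    show "B \<inter> B' = {}"
    proof (rule ccontr)
      assume "B \<inter> B' \<noteq> {}"
      then obtain p where "p \<in> B" "p \<in> B'" by blast
      then obtain j j' where j: "j < 3" "p = (ordT T j, col j (d mod b) x)" and j': "j' < 3" "p = (ordT T' j', col j' (d mod b) x')"
        using Tx Tx' memblow by metis
      have "ordT T j \<in> T \<inter> T'" using ordP1[OF i(1) Tx(1) j(1)] ordP1[OF i(1) Tx'(1) j'(1)] j j' by auto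
      then have TT: "T = T'" using Qs_disj[OF Q i(1) Tx(1) Tx'(1)] by blast
      then have "j = j'" using ordP2[OF i(1) Tx(1) j(1) j'(1)] j j' by simp
      then have "x = x'" using OA_inj[OF O j(1) i(2) Tx(2) Tx'(2)] j j' by simp
      then show False using ne Tx Tx' TT by simp
    qed
  next
    fix d d' B B' assume d: "d < a*b" "d' < a*b" and B: "B \<in> C' d" and B': "B' \<in> C' d'" and ne: "d \<noteq> d' \<or> B \<noteq> B'"
    note i = dd[OF d(1)] and i' = dd[OF d(2)]
    obtain T x where Tx: "T \<in> C (d div b)" "x < b" "B = blow T (d mod b) x" using B unfolding C'_def by auto
    obtain T' x' where Tx': "T' \<in> C (d' div b)" "x' < b" "B' = blow T' (d' mod b) x'" using B' unfolding C'_def by auto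
    show "card (B \<inter> B') \<le> 1"
    proof (rule card_le1I)
      show "finite (B \<inter> B')" using Tx unfolding blow_def by simp
    next
      fix p1 p2 assume p1: "p1 \<in> B \<inter> B'" and p2: "p2 \<in> B \<inter> B'"
      show "p1 = p2"
      proof (rule ccontr)
        assume ne12: "p1 \<noteq> p2"
        obtain j1 where j1: "j1 < 3" "p1 = (ordT T j1, col j1 (d mod b) x)" using p1 Tx memblow by blast
        obtain j2 where j2: "j2 < 3" "p2 = (ordT T j2, col j2 (d mod b) x)" using p2 Tx memblow by blast
        obtain j1' where j1': "j1' < 3" "p1 = (ordT T' j1', col j1' (d' mod b) x')" using p1 Tx' memblow by blast
        obtain j2' where j2': "j2' < 3" "p2 = (ordT T' j2', col j2' (d' mod b) x')" using p2 Tx' memblow by blast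
        have "j1 \<noteq> j2" using ne12 j1 j2 by auto
        then have yne: "ordT T j1 \<noteq> ordT T j2" using ordP2[OF i(1) Tx(1) j1(1) j2(1)] by blast
        have y1: "ordT T j1 \<in> T \<inter> T'" using ordP1[OF i(1) Tx(1) j1(1)] ordP1[OF i'(1) Tx'(1) j1'(1)] j1 j1' by auto
        have y2: "ordT T j2 \<in> T \<inter> T'" using ordP1[OF i(1) Tx(1) j2(1)] ordP1[OF i'(1) Tx'(1) j2'(1)] j2 j2' by auto
        have "card {ordT T j1, ordT T j2} \<le> card (T \<inter> T')"
          using y1 y2 Tfin[OF i(1) Tx(1)] by (intro card_mono) auto
        then have "2 \<le> card (T \<inter> T')" using yne by simp
        then have eq: "d div b = d' div b \<and> T = T'" using Qs_pair[OF Q i(1) i'(1) Tx(1) Tx'(1)] by force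
        have "j1 = j1'" using ordP2[OF i(1) Tx(1) j1(1) j1'(1)] j1 j1' eq by simp
        moreover have "j2 = j2'" using ordP2[OF i(1) Tx(1) j2(1) j2'(1)] j2 j2' eq by simp
        ultimately have "col j1 (d mod b) x = col j1 (d' mod b) x'" "col j2 (d mod b) x = col j2 (d' mod b) x'"
          using j1 j1' j2 j2' by auto
        then have cx: "d mod b = d' mod b \<and> x = x'"
          using OA_orth[OF O j1(1) j2(1) \<open>j1 \<noteq> j2\<close> i(2) Tx(2) i'(2) Tx'(2)] by blast
        have "d = d'" using eq cx by (metis div_mult_mod_eq)
        then show False using ne Tx Tx' eq cx by simp
      qed
    qed
  next
    fix d assume d: "d < a*b"
    note i = dd[OF d]
    show "S' d \<in> C' d" unfolding S'_def C'_def using S1 i OA_t[OF O i(2)] by blast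
  next
    fix d d' assume d: "d < a*b" "d' < a*b" "d \<noteq> d'"
    note i = dd[OF d(1)] and i' = dd[OF d(2)]
    have Si: "S (d div b) \<in> C (d div b)" "S (d' div b) \<in> C (d' div b)" using S1 i i' by auto
    show "S' d \<inter> S' d' = {}"
    proof (rule ccontr)
      assume "S' d \<inter> S' d' \<noteq> {}"
      then obtain p where "p \<in> S' d" "p \<in> S' d'" by blast
      then obtain j j' where j: "j < 3" "p = (ordT (S (d div b)) j, col j (d mod b) (t (d mod b)))"
        and j': "j' < 3" "p = (ordT (S (d' div b)) j', col j' (d' mod b) (t (d' mod b)))"
        unfolding S'_def using memblow by metis
      have "ordT (S (d div b)) j \<in> S (d div b) \<inter> S (d' div b)"
        using ordP1[OF i(1) Si(1) j(1)] ordP1[OF i'(1) Si(2) j'(1)] j j' by auto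
      then have dv: "d div b = d' div b" using S2 i(1) i'(1) by blast
      then have "j = j'" using ordP2[OF i(1) Si(1) j(1) j'(1)] j j' by simp
      then have "d mod b = d' mod b" using OA_tinj[OF O j(1) i(2) i'(2)] j j' by simp
      then have "d = d'" using dv by (metis div_mult_mod_eq)
      then show False using d(3) by simp
    qed
  qed
  then show ?thesis by (rule Qex_of_Qs)
qed


definition g4add :: "nat list list" where "g4add = [[0,1,2,3],[1,0,3,2],[2,3,0,1],[3,2,1,0]]"
definition g4m2 :: "nat list" where "g4m2 = [0,2,3,1]"
definition g4m3 :: "nat list" where "g4m3 = [0,3,1,2]"
definition col4 :: "nat \<Rightarrow> nat \<Rightarrow> nat \<Rightarrow> nat" where
  "col4 j c x = (if j = 0 then x else if j = 1 then g4add ! x ! c else g4add ! x ! (g4m2 ! c))"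
definition t4 :: "nat \<Rightarrow> nat" where "t4 c = g4m3 ! c"

lemma OA4: "OA4T 4 col4 t4" unfolding OA4T_def col4_def t4_def g4add_def g4m2_def g4m3_def by code_simp

definition g9add :: "nat list list" where "g9add = [[0, 1, 2, 3, 4, 5, 6, 7, 8], [1, 2, 0, 4, 5, 3, 7, 8, 6], [2, 0, 1, 5, 3, 4, 8, 6, 7], [3, 4, 5, 6, 7, 8, 0, 1, 2], [4, 5, 3, 7, 8, 6, 1, 2, 0], [5, 3, 4, 8, 6, 7, 2, 0, 1], [6, 7, 8, 0, 1, 2, 3, 4, 5], [7, 8, 6, 1, 2, 0, 4, 5, 3], [8, 6, 7, 2, 0, 1, 5, 3, 4]]"
definition g9m :: "nat list" where "g9m = [0, 6, 3, 1, 7, 4, 2, 8, 5]"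
definition col9 :: "nat \<Rightarrow> nat \<Rightarrow> nat \<Rightarrow> nat" where
  "col9 j c x = (if j = 0 then x else if j = 1 then g9add ! x ! c else g9add ! x ! (g9m ! c))"
definition t9 :: "nat \<Rightarrow> nat" where "t9 c = g9m ! c"

lemma OA9: "OA4T 9 col9 t9" unfolding OA4T_def col9_def t9_def g9add_def g9m_def by code_simp


lemma OA4TI:
  assumes "\<And>j c x. j < 3 \<Longrightarrow> c < b \<Longrightarrow> x < b \<Longrightarrow> col j c x < b"
    and "\<And>j c x x'. j < 3 \<Longrightarrow> c < b \<Longrightarrow> x < b \<Longrightarrow> x' < b \<Longrightarrow> col j c x = col j c x' \<Longrightarrow> x = x'"
    and "\<And>j1 j2 c x c' x'. j1 < 3 \<Longrightarrow> j2 < 3 \<Longrightarrow> j1 \<noteq> j2 \<Longrightarrow> c < b \<Longrightarrow> x < b \<Longrightarrow> c' < b \<Longrightarrow> x' < b \<Longrightarrow>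
          col j1 c x = col j1 c' x' \<Longrightarrow> col j2 c x = col j2 c' x' \<Longrightarrow> c = c' \<and> x = x'"
    and "\<And>c. c < b \<Longrightarrow> t c < b"
    and "\<And>j c c'. j < 3 \<Longrightarrow> c < b \<Longrightarrow> c' < b \<Longrightarrow> col j c (t c) = col j c' (t c') \<Longrightarrow> c = c'"
  shows "OA4T b col t"
  unfolding OA4T_def
  apply (intro conjI ballI impI)
  subgoal by (rule assms(1)) simp_all
  subgoal by (rule assms(2)) simp_all
  subgoal for j1 j2 c x c' x' using assms(3)[of j1 j2 c x c' x'] by simp
  subgoal for j1 j2 c x c' x' using assms(3)[of j1 j2 c x c' x'] by simp
  subgoal by (rule assms(4)) simp_all
  subgoal by (rule assms(5)) simp_all
  done

lemma nat_mod_eq_dvd: "((a::nat) mod m = b mod m) \<longleftrightarrow> int m dvd int a - int b"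
proof -
  have "(a mod m = b mod m) \<longleftrightarrow> int (a mod m) = int (b mod m)" by simp
  also have "\<dots> \<longleftrightarrow> int a mod int m = int b mod int m" by (simp add: zmod_int)
  also have "\<dots> \<longleftrightarrow> int m dvd int a - int b" by (rule mod_eq_dvd_iff)
  finally show ?thesis .
qed

lemma dvd_small_int: assumes "(m::int) dvd d" "\<bar>d\<bar> < m" shows "d = 0"
proof (rule ccontr)
  assume "d \<noteq> 0"
  then have "\<bar>m\<bar> \<le> \<bar>d\<bar>" using dvd_imp_le_int assms(1) by blast
  then show False using assms(2) by linarith
qed

lemma unit_cancel_int: "coprime (m::int) u \<Longrightarrow> m dvd u * d \<Longrightarrow> m dvd d"
  by (simp add: coprime_dvd_mult_right_iff)

lemma coprime6_23: assumes "coprime (m::int) 6" shows "coprime m 2" "coprime m 3"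
proof -
  have "(6::int) = 2 * 3" by simp
  then show "coprime m 2" "coprime m 3" using assms by (metis coprime_mult_right_iff)+
qed

lemma OA_lin:
  assumes cop: "coprime (int m) 6" and m0: "m > 0"
  shows "OA4T m (\<lambda>j c x. (x + j*c) mod m) (\<lambda>c. c)"
proof (rule OA4TI)
  have c2: "coprime (int m) 2" and c3: "coprime (int m) 3" using coprime6_23[OF cop] by auto
  have c1: "coprime (int m) 1" by simp
  have cu: "coprime (int m) u" if "u \<in> {1,2,3::int}" for u using that c1 c2 c3 by blast
  have cneg: "coprime (int m) (- u)" if "coprime (int m) u" for u using that by simp
  show "(x + j*c) mod m < m" for j c x using m0 by simp
  show "x = x'" if "j < 3" "c < m" "x < m" "x' < m" "(x + j*c) mod m = (x' + j*c) mod m" for j c x x'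
  proof -
    have "int m dvd int (x + j*c) - int (x' + j*c)" using that(5) nat_mod_eq_dvd by blast
    then have "int m dvd int x - int x'" by simp
    then have "int x - int x' = 0" using that(3,4) by (intro dvd_small_int) auto
    then show ?thesis by simp
  qed
  show "c = c' \<and> x = x'" if a: "j1 < 3" "j2 < 3" "j1 \<noteq> j2" "c < m" "x < m" "c' < m" "x' < m"
      "(x + j1*c) mod m = (x' + j1*c') mod m" "(x + j2*c) mod m = (x' + j2*c') mod m" for j1 j2 c x c' x'
  proof -
    have d1: "int m dvd int x + int j1 * int c - (int x' + int j1 * int c')" using a(8) nat_mod_eq_dvd by simp
    have d2: "int m dvd int x + int j2 * int c - (int x' + int j2 * int c')" using a(9) nat_mod_eq_dvd by simp
    have "int m dvd (int x + int j2 * int c - (int x' + int j2 * int c')) - (int x + int j1 * int c - (int x' + int j1 * int c'))"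
      using d1 d2 by (rule dvd_diff[rotated])
    then have "int m dvd (int j2 - int j1) * (int c - int c')" by (simp add: algebra_simps)
    moreover have "coprime (int m) (int j2 - int j1)"
    proof -
      have "int j2 - int j1 \<in> {1,2,-1,-2}" using a(1-3) by auto
      then show ?thesis using cu[of 1] cu[of 2] cneg[of 1] cneg[of 2] by auto
    qed
    ultimately have "int m dvd int c - int c'" using unit_cancel_int by blast
    then have "int c - int c' = 0" using a(4,6) by (intro dvd_small_int) auto
    then have cc: "c = c'" by simp
    then have "int m dvd int x - int x'" using d1 by simp
    then have "int x - int x' = 0" using a(5,7) by (intro dvd_small_int) auto
    then show ?thesis using cc by simp
  qed
  show "c < m" if "c < m" for c using that .
  show "c = c'" if a: "j < 3" "c < m" "c' < m" "(c + j*c) mod m = (c' + j*c') mod m" for j c c'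
  proof -
    have "int m dvd int (c + j*c) - int (c' + j*c')" using a(4) nat_mod_eq_dvd by blast
    then have "int m dvd (1 + int j) * (int c - int c')" by (simp add: algebra_simps)
    moreover have "coprime (int m) (1 + int j)"
    proof (rule cu)
      have "j = 0 \<or> j = 1 \<or> j = 2" using a(1) by linarith
      then show "1 + int j \<in> {1,2,3}" by auto
    qed
    ultimately have "int m dvd int c - int c'" using unit_cancel_int by blast
    then have "int c - int c' = 0" using a(2,3) by (intro dvd_small_int) auto
    then show ?thesis by simp
  qed
qed


definition Ul :: "int list" where "Ul = [1,-1,2,-2,3,-3,4,-4,6,-6,8,-8,9,-9,12,-12]"

definition sE :: "int \<times> int \<times> int \<Rightarrow> int" where "sE x = fst x"
definition sL :: "int \<times> int \<times> int \<Rightarrow> int" where "sL x = fst (snd x)"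
definition sJ :: "int \<times> int \<times> int \<Rightarrow> int" where "sJ x = snd (snd x)"

definition cls :: "int \<Rightarrow> (int \<times> int \<times> int) list list \<Rightarrow> nat \<Rightarrow> nat \<Rightarrow> nat \<Rightarrow> int \<times> int \<times> int" where
  "cls k F f s t = (sJ (F!f!s), sJ (F!f!t), (sE (F!f!t) - sE (F!f!s)) mod k)"
definition mu :: "(int \<times> int \<times> int) list list \<Rightarrow> nat \<Rightarrow> nat \<Rightarrow> nat \<Rightarrow> int" where
  "mu F f s t = sL (F!f!t) - sL (F!f!s)"

definition allowed :: "int \<Rightarrow> (int \<times> int \<times> int) list list \<Rightarrow> nat list \<Rightarrow> int \<times> int \<times> int \<Rightarrow> int \<Rightarrow> bool" where
  "allowed k F R cl d \<longleftrightarrow> d = 0 \<or>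
     (\<exists>f\<in>set R. \<exists>st\<in>set prs. cls k F f (fst st) (snd st) = cl \<and> mu F f (fst st) (snd st) = d) \<or>
     (\<forall>f\<in>set [0..<length F]. \<forall>st\<in>set prs. cls k F f (fst st) (snd st) = cl \<longrightarrow>
        d \<in> {- mu F f (fst st) (snd st), -2 * mu F f (fst st) (snd st), -3 * mu F f (fst st) (snd st)})"

definition famchk :: "int \<Rightarrow> int \<Rightarrow> (int \<times> int \<times> int) list list \<Rightarrow> nat list \<Rightarrow> (int \<times> int \<times> int) list list \<Rightarrow> bool" where
  "famchk k B F R Cp \<longleftrightarrow>
    length F = nat (2*k) \<and>
    (\<forall>f\<in>set [0..<length F]. length (F!f) = 3) \<and>
    (\<forall>f\<in>set [0..<length F]. \<forall>s\<in>set [0..<3]. 0 \<le> sE (F!f!s) \<and> sE (F!f!s) < k \<and> 0 \<le> sJ (F!f!s) \<and> sJ (F!f!s) < 3 \<and> sL (F!f!s) \<in> set Ul) \<and>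
    (\<forall>f\<in>set [0..<length F]. \<forall>s\<in>set [0..<3]. \<forall>f'\<in>set [0..<length F]. \<forall>s'\<in>set [0..<3].
        (f,s) \<noteq> (f',s') \<and> sE (F!f!s) = sE (F!f'!s') \<and> sJ (F!f!s) = sJ (F!f'!s') \<longrightarrow> sL (F!f'!s') = - sL (F!f!s)) \<and>
    (\<forall>f\<in>set [0..<length F]. \<forall>st\<in>set prs. mu F f (fst st) (snd st) \<in> set Ul) \<and>
    (\<forall>f\<in>set [0..<length F]. \<forall>st\<in>set prs. \<forall>f'\<in>set [0..<length F]. \<forall>st'\<in>set prs.
        (f,st) \<noteq> (f',st') \<and> cls k F f (fst st) (snd st) = cls k F f' (fst st') (snd st') \<longrightarrow>
        mu F f' (fst st') (snd st') = - mu F f (fst st) (snd st)) \<and>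
    distinct R \<and> (\<forall>r\<in>set R. r < length F) \<and> length Cp = nat k + length R \<and>
    (\<forall>c\<in>set [0..<length Cp]. length (Cp!c) = 3) \<and>
    (\<forall>c\<in>set [0..<length Cp]. \<forall>s\<in>set [0..<3]. 0 \<le> sE (Cp!c!s) \<and> sE (Cp!c!s) < k \<and> 0 \<le> sJ (Cp!c!s) \<and> sJ (Cp!c!s) < 3 \<and> \<bar>sL (Cp!c!s)\<bar> \<le> B) \<and>
    distinct (map (\<lambda>x. Cp!(x div 3)!(x mod 3)) [0..<3 * length Cp]) \<and>
    (\<forall>c\<in>set [0..<length Cp]. \<forall>s\<in>set [0..<3]. sL (Cp!c!s) = 0 \<or> (\<exists>f\<in>set R. \<exists>s'\<in>set [0..<3]. Cp!c!s = F!f!s')) \<and>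
    distinct (map (\<lambda>x. (sJ (Cp!(x div 6)!(fst (prs!(x mod 6)))), sJ (Cp!(x div 6)!(snd (prs!(x mod 6)))),
                        (sE (Cp!(x div 6)!(snd (prs!(x mod 6)))) - sE (Cp!(x div 6)!(fst (prs!(x mod 6))))) mod k,
                        sL (Cp!(x div 6)!(snd (prs!(x mod 6)))) - sL (Cp!(x div 6)!(fst (prs!(x mod 6)))))) [0..<6 * length Cp]) \<and>
    (\<forall>c\<in>set [0..<length Cp]. \<forall>st\<in>set prs.
        allowed k F R (sJ (Cp!c!(fst st)), sJ (Cp!c!(snd st)), (sE (Cp!c!(snd st)) - sE (Cp!c!(fst st))) mod k)
          (sL (Cp!c!(snd st)) - sL (Cp!c!(fst st)))) \<and>
    (\<exists>c\<in>set [0..<length Cp]. sJ (Cp!c!0) \<noteq> sJ (Cp!c!1) \<and> sJ (Cp!c!0) \<noteq> sJ (Cp!c!2) \<and> sJ (Cp!c!1) \<noteq> sJ (Cp!c!2))"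

definition F2 :: "(int \<times> int \<times> int) list list" where
  "F2 = [[(0,1,0),(0,-1,1),(1,-3,2)], [(0,-1,0),(0,-2,2),(1,-4,1)], [(0,1,1),(0,2,2),(1,-2,0)], [(1,2,0),(1,4,1),(1,3,2)]]"
definition R2 :: "nat list" where "R2 = [0,1,2]"
definition C2 :: "(int \<times> int \<times> int) list list" where
  "C2 = [[(0,0,0),(0,1,0),(1,-2,0)], [(0,0,1),(0,0,2),(1,0,0)], [(1,0,1),(0,1,1),(0,2,2)], [(1,0,2),(1,-3,2),(0,-2,2)], [(0,-1,1),(0,-1,0),(1,-4,1)]]"

definition F3 :: "(int \<times> int \<times> int) list list" where
  "F3 = [[(0,1,0),(0,-1,1),(2,2,0)], [(0,-1,0),(0,1,1),(2,-2,0)], [(0,1,2),(1,-1,0),(2,2,2)], [(0,-1,2),(1,1,0),(2,-2,2)], [(1,1,1),(1,-1,2),(2,2,1)], [(1,-1,1),(1,1,2),(2,-2,1)]]"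
definition R3 :: "nat list" where "R3 = [0,3]"
definition C3 :: "(int \<times> int \<times> int) list list" where
  "C3 = [[(0,0,0),(0,0,1),(0,0,2)], [(1,0,0),(2,0,0),(1,1,0)], [(1,0,1),(2,0,2),(2,-2,2)], [(1,0,2),(0,-1,1),(2,2,0)], [(2,0,1),(0,1,0),(0,-1,2)]]"


lemma Ul_cases: "x \<in> set Ul \<Longrightarrow> \<exists>a b. (x = 2^a * 3^b \<or> x = - (2^a * 3^b))"
  unfolding Ul_def
  apply simp
  apply (elim disjE)
  by (rule exI[of _ 0] exI[of _ 1] exI[of _ 2] exI[of _ 3], rule exI[of _ 0] exI[of _ 1] exI[of _ 2], simp)+

lemma coprime_Ul: assumes "coprime (m::int) 6" "x \<in> set Ul" shows "coprime m x"
proof -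
  have c2: "coprime m 2" and c3: "coprime m 3" using coprime6_23[OF assms(1)] by auto
  obtain a b where ab: "x = 2^a * 3^b \<or> x = - (2^a * 3^b)" using Ul_cases[OF assms(2)] by blast
  have "coprime m (2^a * 3^b)" using c2 c3 by simp
  then show ?thesis using ab by auto
qed

lemma upt_memG: "x < n \<Longrightarrow> x \<in> set [0..<n]" by simp

locale famctx =
  fixes k m B :: int and F :: "(int \<times> int \<times> int) list list" and R :: "nat list" and Cp :: "(int \<times> int \<times> int) list list"
  assumes chk: "famchk k B F R Cp" and k0: "k > 0" and cop: "coprime m 6" and m7: "m \<ge> 7" and mB: "4 * B < m"
begin

lemma m_odd: "odd m"
  using coprime6_23(1)[OF cop] by (simp add: coprime_commute)

definition h :: int where "h = (m - 1) div 2"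
lemma h2: "2 * h = m - 1" unfolding h_def using m_odd by (metis dvd_mult_div_cancel odd_two_times_div_two_nat add_diff_cancel_right' odd_two_times_div_two_succ dvd_minus_mod minus_mod_eq_mult_div)


abbreviation nF where "nF \<equiv> length F"
abbreviation nC where "nC \<equiv> length Cp"

lemma c_lenF: "length F = nat (2*k)" using chk unfolding famchk_def by (elim conjE) assumption
lemma c_slot: assumes "f < nF" "s < 3"
  shows "0 \<le> sE (F!f!s) \<and> sE (F!f!s) < k \<and> 0 \<le> sJ (F!f!s) \<and> sJ (F!f!s) < 3 \<and> sL (F!f!s) \<in> set Ul"
proof -
  have h: "\<forall>f\<in>set [0..<length F]. \<forall>s\<in>set [0..<3]. 0 \<le> sE (F!f!s) \<and> sE (F!f!s) < k \<and> 0 \<le> sJ (F!f!s) \<and> sJ (F!f!s) < 3 \<and> sL (F!f!s) \<in> set Ul"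
    using chk unfolding famchk_def by (elim conjE) assumption
  show ?thesis using bspec[OF bspec[OF h upt_memG[OF assms(1)]] upt_memG[OF assms(2)]] .
qed
lemma c_rowopp: assumes "f < nF" "s < 3" "f' < nF" "s' < 3" "(f,s) \<noteq> (f',s')" "sE (F!f!s) = sE (F!f'!s')" "sJ (F!f!s) = sJ (F!f'!s')"
  shows "sL (F!f'!s') = - sL (F!f!s)"
proof -
  have h: "\<forall>f\<in>set [0..<length F]. \<forall>s\<in>set [0..<3]. \<forall>f'\<in>set [0..<length F]. \<forall>s'\<in>set [0..<3].
        (f,s) \<noteq> (f',s') \<and> sE (F!f!s) = sE (F!f'!s') \<and> sJ (F!f!s) = sJ (F!f'!s') \<longrightarrow> sL (F!f'!s') = - sL (F!f!s)"
    using chk unfolding famchk_def by (elim conjE) assumption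
  show ?thesis using bspec[OF bspec[OF bspec[OF bspec[OF h upt_memG[OF assms(1)]] upt_memG[OF assms(2)]] upt_memG[OF assms(3)]] upt_memG[OF assms(4)]] assms(5-7) by blast
qed
lemma c_mu: assumes "f < nF" "st \<in> set prs" shows "mu F f (fst st) (snd st) \<in> set Ul"
proof -
  have h: "\<forall>f\<in>set [0..<length F]. \<forall>st\<in>set prs. mu F f (fst st) (snd st) \<in> set Ul"
    using chk unfolding famchk_def by (elim conjE) assumption
  show ?thesis using bspec[OF bspec[OF h upt_memG[OF assms(1)]] assms(2)] .
qed
lemma c_clsopp: assumes "f < nF" "st \<in> set prs" "f' < nF" "st' \<in> set prs" "(f,st) \<noteq> (f',st')"
   "cls k F f (fst st) (snd st) = cls k F f' (fst st') (snd st')"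
  shows "mu F f' (fst st') (snd st') = - mu F f (fst st) (snd st)"
proof -
  have h: "\<forall>f\<in>set [0..<length F]. \<forall>st\<in>set prs. \<forall>f'\<in>set [0..<length F]. \<forall>st'\<in>set prs.
        (f,st) \<noteq> (f',st') \<and> cls k F f (fst st) (snd st) = cls k F f' (fst st') (snd st') \<longrightarrow>
        mu F f' (fst st') (snd st') = - mu F f (fst st) (snd st)"
    using chk unfolding famchk_def by (elim conjE) assumption
  show ?thesis using bspec[OF bspec[OF bspec[OF bspec[OF h upt_memG[OF assms(1)]] assms(2)] upt_memG[OF assms(3)]] assms(4)] assms(5,6) by blast
qed
lemma c_Rdist: "distinct R" using chk unfolding famchk_def by (elim conjE) assumption
lemma c_Rlt: "r \<in> set R \<Longrightarrow> r < nF"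
proof -
  have h: "\<forall>r\<in>set R. r < length F" using chk unfolding famchk_def by (elim conjE) assumption
  then show "r \<in> set R \<Longrightarrow> r < nF" by blast
qed
lemma c_lenC: "nC = nat k + length R" using chk unfolding famchk_def by (elim conjE) assumption
lemma c_cslot: assumes "c < nC" "s < 3"
  shows "0 \<le> sE (Cp!c!s) \<and> sE (Cp!c!s) < k \<and> 0 \<le> sJ (Cp!c!s) \<and> sJ (Cp!c!s) < 3 \<and> \<bar>sL (Cp!c!s)\<bar> \<le> B"
proof -
  have h: "\<forall>c\<in>set [0..<length Cp]. \<forall>s\<in>set [0..<3]. 0 \<le> sE (Cp!c!s) \<and> sE (Cp!c!s) < k \<and> 0 \<le> sJ (Cp!c!s) \<and> sJ (Cp!c!s) < 3 \<and> \<bar>sL (Cp!c!s)\<bar> \<le> B"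
    using chk unfolding famchk_def by (elim conjE) assumption
  show ?thesis using bspec[OF bspec[OF h upt_memG[OF assms(1)]] upt_memG[OF assms(2)]] .
qed
lemma c_cdist: assumes "c < nC" "s < 3" "c' < nC" "s' < 3" "Cp!c!s = Cp!c'!s'" shows "c = c' \<and> s = s'"
proof -
  have d: "distinct (map (\<lambda>x. Cp!(x div 3)!(x mod 3)) [0..<3 * length Cp])"
    using chk unfolding famchk_def by (elim conjE) assumption
  have inj: "inj_on (\<lambda>x. Cp!(x div 3)!(x mod 3)) {0..<3 * length Cp}" using d by (simp add: distinct_map)
  have "3*c+s \<in> {0..<3*nC}" "3*c'+s' \<in> {0..<3*nC}" using assms by auto
  moreover have "(\<lambda>x. Cp!(x div 3)!(x mod 3)) (3*c+s) = (\<lambda>x. Cp!(x div 3)!(x mod 3)) (3*c'+s')" using assms by simp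
  ultimately have "3*c+s = 3*c'+s'" using inj by (meson inj_onD)
  then show ?thesis using assms by presburger
qed
lemma c_src: assumes "c < nC" "s < 3" shows "sL (Cp!c!s) = 0 \<or> (\<exists>f\<in>set R. \<exists>s'<3. Cp!c!s = F!f!s')"
proof -
  have h: "\<forall>c\<in>set [0..<length Cp]. \<forall>s\<in>set [0..<3]. sL (Cp!c!s) = 0 \<or> (\<exists>f\<in>set R. \<exists>s'\<in>set [0..<3]. Cp!c!s = F!f!s')"
    using chk unfolding famchk_def by (elim conjE) assumption
  have "sL (Cp!c!s) = 0 \<or> (\<exists>f\<in>set R. \<exists>s'\<in>set [0..<3]. Cp!c!s = F!f!s')"
    using bspec[OF bspec[OF h upt_memG[OF assms(1)]] upt_memG[OF assms(2)]] .
  then show ?thesis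
  proof
    assume "sL (Cp!c!s) = 0" then show ?thesis ..
  next
    assume "\<exists>f\<in>set R. \<exists>s'\<in>set [0..<3]. Cp!c!s = F!f!s'"
    then obtain f s' where fs: "f \<in> set R" "s' \<in> set [0..<3]" "Cp!c!s = F!f!s'" by blast
    have "s' < 3" using fs(2) by simp
    then show ?thesis using fs(1,3) by blast
  qed
qed

definition ckey :: "nat \<Rightarrow> nat \<Rightarrow> nat \<Rightarrow> int \<times> int \<times> int \<times> int" where
  "ckey c s t = (sJ (Cp!c!s), sJ (Cp!c!t), (sE (Cp!c!t) - sE (Cp!c!s)) mod k, sL (Cp!c!t) - sL (Cp!c!s))"

lemma c_ckdist: assumes "c < nC" "st \<in> set prs" "c' < nC" "st' \<in> set prs"
  "ckey c (fst st) (snd st) = ckey c' (fst st') (snd st')" shows "c = c' \<and> st = st'"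
proof -
  have d: "distinct (map (\<lambda>x. (sJ (Cp!(x div 6)!(fst (prs!(x mod 6)))), sJ (Cp!(x div 6)!(snd (prs!(x mod 6)))),
                        (sE (Cp!(x div 6)!(snd (prs!(x mod 6)))) - sE (Cp!(x div 6)!(fst (prs!(x mod 6))))) mod k,
                        sL (Cp!(x div 6)!(snd (prs!(x mod 6)))) - sL (Cp!(x div 6)!(fst (prs!(x mod 6)))))) [0..<6 * length Cp])"
    using chk unfolding famchk_def by (elim conjE) assumption
  have inj: "inj_on (\<lambda>x. ckey (x div 6) (fst (prs!(x mod 6))) (snd (prs!(x mod 6)))) {0..<6 * nC}"
    using d unfolding ckey_def by (simp add: distinct_map)
  have pl: "length prs = 6" by (simp add: prs_def)
  obtain r where r: "r < 6" "prs ! r = st" using assms(2) pl by (metis in_set_conv_nth)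
  obtain r' where r': "r' < 6" "prs ! r' = st'" using assms(4) pl by (metis in_set_conv_nth)
  have "6*c+r \<in> {0..<6*nC}" "6*c'+r' \<in> {0..<6*nC}" using assms r r' by auto
  moreover have "(\<lambda>x. ckey (x div 6) (fst (prs!(x mod 6))) (snd (prs!(x mod 6)))) (6*c+r) =
                 (\<lambda>x. ckey (x div 6) (fst (prs!(x mod 6))) (snd (prs!(x mod 6)))) (6*c'+r')"
    using assms r r' by simp
  ultimately have "6*c+r = 6*c'+r'" using inj by (meson inj_onD)
  then have "c = c'" "r = r'" using r r' by presburger+
  then show ?thesis using r r' by simp
qed
lemma c_allowed: assumes "c < nC" "st \<in> set prs"
  shows "allowed k F R (fst (ckey c (fst st) (snd st)), fst (snd (ckey c (fst st) (snd st))), fst (snd (snd (ckey c (fst st) (snd st)))))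
           (snd (snd (snd (ckey c (fst st) (snd st)))))"
proof -
  have h: "\<forall>c\<in>set [0..<length Cp]. \<forall>st\<in>set prs.
        allowed k F R (sJ (Cp!c!(fst st)), sJ (Cp!c!(snd st)), (sE (Cp!c!(snd st)) - sE (Cp!c!(fst st))) mod k)
          (sL (Cp!c!(snd st)) - sL (Cp!c!(fst st)))"
    using chk unfolding famchk_def by (elim conjE) assumption
  show ?thesis using bspec[OF bspec[OF h upt_memG[OF assms(1)]] assms(2)] unfolding ckey_def by simp
qed
lemma c_trans: "\<exists>c<nC. sJ (Cp!c!0) \<noteq> sJ (Cp!c!1) \<and> sJ (Cp!c!0) \<noteq> sJ (Cp!c!2) \<and> sJ (Cp!c!1) \<noteq> sJ (Cp!c!2)"
proof -
  have h: "\<exists>c\<in>set [0..<length Cp]. sJ (Cp!c!0) \<noteq> sJ (Cp!c!1) \<and> sJ (Cp!c!0) \<noteq> sJ (Cp!c!2) \<and> sJ (Cp!c!1) \<noteq> sJ (Cp!c!2)"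
    using chk unfolding famchk_def by (elim conjE) assumption
  then show ?thesis by auto
qed

lemma prs_mem: "st \<in> set prs \<Longrightarrow> fst st < 3 \<and> snd st < 3 \<and> fst st \<noteq> snd st"
  unfolding prs_def by auto
lemma prs_in: assumes "s < 3" "t < 3" "s \<noteq> t" shows "(s,t) \<in> set prs"
proof -
  obtain r where "r < 6" "prs ! r = (s,t)" using prs_ex[OF assms] by blast
  moreover have "length prs = 6" by (simp add: prs_def)
  ultimately show ?thesis by (metis nth_mem)
qed

lemma m0: "m > 0" using m7 by simp
lemma unitUl: "x \<in> set Ul \<Longrightarrow> coprime m x" using coprime_Ul[OF cop] by blast

lemma L_sum: assumes "coprime m l" "1 \<le> u" "1 \<le> v" "u + v < m" "(l*u) mod m = ((-l)*v) mod m" shows False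
proof -
  have "m dvd l*u - (-l)*v" using assms(5) by (simp add: mod_eq_dvd_iff)
  then have "m dvd l * (u + v)" by (simp add: algebra_simps)
  then have "m dvd u + v" using unit_cancel_int[OF assms(1)] by blast
  then have "u + v = 0" using assms(2-4) by (intro dvd_small_int) auto
  then show False using assms(2,3) by simp
qed
lemma L_eq: assumes "coprime m l" "0 \<le> u" "u < m" "0 \<le> u'" "u' < m" "(l*u) mod m = (l*u') mod m" shows "u = u'"
proof -
  have "m dvd l*u - l*u'" using assms(6) by (simp add: mod_eq_dvd_iff)
  then have "m dvd l * (u - u')" by (simp add: algebra_simps)
  then have "m dvd u - u'" using unit_cancel_int[OF assms(1)] by blast
  then have "u - u' = 0" using assms(2-5) by (intro dvd_small_int) auto
  then show ?thesis by simp
qed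
lemma L_zero: assumes "coprime m l" "1 \<le> u" "u < m" "(l*u) mod m = 0" shows False
proof -
  have "(l*u) mod m = (l*0) mod m" using assms(4) by simp
  moreover have "0 \<le> u" "(0::int) \<le> 0" "(0::int) < m" using assms(2) m0 by auto
  ultimately have "u = 0" using L_eq[OF assms(1), of u 0] assms(3) by blast
  then show False using assms(2) by simp
qed

lemma h_ge: "h \<ge> 3" using h2 m7 by linarith
lemma h_lt: "h + 3 < m" using h2 m7 by linarith

lemma L_eqH: assumes "coprime m l" "1 \<le> u" "u \<le> h" "1 \<le> u'" "u' \<le> h" "(l*u) mod m = (l*u') mod m" shows "u = u'"
proof -
  have "0 \<le> u" "u < m" "0 \<le> u'" "u' < m" using assms(2-5) h2 by linarith+
  then show ?thesis using L_eq[OF assms(1)] assms(6) by blast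
qed
lemma L_sumH: assumes "coprime m l" "1 \<le> u" "u \<le> h" "1 \<le> v" "v \<le> h" "(l*u) mod m = ((-l)*v) mod m" shows False
proof -
  have "u + v < m" using assms(2-5) h2 by linarith
  then show False using L_sum[OF assms(1) assms(2) assms(4)] assms(6) by blast
qed
lemma L_sum3: assumes "coprime m l" "1 \<le> u" "u \<le> h" "v \<in> {1,2,3}" "(l*u) mod m = ((-l)*v) mod m" shows False
proof -
  have "1 \<le> v" "u + v < m" using assms(2-4) h_lt by auto
  then show False using L_sum[OF assms(1) assms(2)] assms(5) by blast
qed
lemma L_zeroH: assumes "coprime m l" "1 \<le> u" "u \<le> h" "(l*u) mod m = 0" shows False
proof -
  have "u < m" using assms(2,3) h2 by linarith
  then show False using L_zero[OF assms(1) assms(2)] assms(4) by blast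
qed
lemma L_oneH: assumes "coprime m l" "1 \<le> u" "u \<le> h" "(l*u) mod m = (l*1) mod m" shows "u = 1"
  using L_eqH[OF assms(1,2,3)] assms(4) h_ge by simp

definition fpt :: "nat \<Rightarrow> int \<Rightarrow> nat \<Rightarrow> pnt" where
  "fpt f u s = (sE (F!f!s), (sL (F!f!s) * u) mod m, sJ (F!f!s))"
definition cpt :: "nat \<Rightarrow> nat \<Rightarrow> pnt" where
  "cpt c s = (sE (Cp!c!s), sL (Cp!c!s) mod m, sJ (Cp!c!s))"
definition FI :: "(nat \<times> int) set" where
  "FI = {(f,u). f < nF \<and> 1 \<le> u \<and> u \<le> h \<and> \<not> (f \<in> set R \<and> u = 1)}"
definition Ix :: "((nat \<times> int) + nat) set" where "Ix = Inl ` FI \<union> Inr ` {..<nC}"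
definition ptx :: "(nat \<times> int) + nat \<Rightarrow> nat \<Rightarrow> pnt" where
  "ptx x s = (case x of Inl fu \<Rightarrow> fpt (fst fu) (snd fu) s | Inr c \<Rightarrow> cpt c s)"

lemma FF_pt: assumes "(f,u) \<in> FI" "(f',u') \<in> FI" "s < 3" "s' < 3" "fpt f u s = fpt f' u' s'"
  shows "f = f' \<and> u = u' \<and> s = s'"
proof -
  have a: "f < nF" "1 \<le> u" "u \<le> h" "f' < nF" "1 \<le> u'" "u' \<le> h" using assms(1,2) unfolding FI_def by auto
  have e: "sE (F!f!s) = sE (F!f'!s')" "sJ (F!f!s) = sJ (F!f'!s')" "(sL (F!f!s) * u) mod m = (sL (F!f'!s') * u') mod m"
    using assms(5) unfolding fpt_def by auto
  have cu: "coprime m (sL (F!f!s))" using c_slot[OF a(1) assms(3)] unitUl by blast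
  show ?thesis
  proof (cases "(f,s) = (f',s')")
    case True
    then have "(sL (F!f!s) * u) mod m = (sL (F!f!s) * u') mod m" using e(3) by simp
    then have "u = u'" by (rule L_eqH[OF cu a(2) a(3) a(5) a(6)])
    then show ?thesis using True by simp
  next
    case False
    have "sL (F!f'!s') = - sL (F!f!s)" using c_rowopp[OF a(1) assms(3) a(4) assms(4) False e(1,2)] .
    then have "(sL (F!f!s) * u) mod m = ((- sL (F!f!s)) * u') mod m" using e(3) by simp
    then have False by (rule L_sumH[OF cu a(2) a(3) a(5) a(6)])
    then show ?thesis ..
  qed
qed

lemma FC_pt: assumes "(f,u) \<in> FI" "c < nC" "s < 3" "s' < 3" "fpt f u s = cpt c s'" shows False
proof -
  have a: "f < nF" "1 \<le> u" "u \<le> h" "\<not> (f \<in> set R \<and> u = 1)" using assms(1) unfolding FI_def by auto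
  have e: "sE (F!f!s) = sE (Cp!c!s')" "sJ (F!f!s) = sJ (Cp!c!s')" "(sL (F!f!s) * u) mod m = sL (Cp!c!s') mod m"
    using assms(5) unfolding fpt_def cpt_def by auto
  have cu: "coprime m (sL (F!f!s))" using c_slot[OF a(1) assms(3)] unitUl by blast
  consider (z) "sL (Cp!c!s') = 0" | (r) f0 s0 where "f0 \<in> set R" "s0 < 3" "Cp!c!s' = F!f0!s0"
    using c_src[OF assms(2,4)] by blast
  then show False
  proof cases
    case z
    then have "(sL (F!f!s) * u) mod m = 0" using e(3) by simp
    then show False by (rule L_zeroH[OF cu a(2) a(3)])
  next
    case r
    have f0: "f0 < nF" using c_Rlt r(1) by blast
    have e': "sE (F!f!s) = sE (F!f0!s0)" "sJ (F!f!s) = sJ (F!f0!s0)" "(sL (F!f!s) * u) mod m = sL (F!f0!s0) mod m"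
      using e r(3) by auto
    show False
    proof (cases "(f,s) = (f0,s0)")
      case True
      then have "(sL (F!f!s) * u) mod m = (sL (F!f!s) * 1) mod m" using e'(3) by simp
      then have "u = 1" by (rule L_oneH[OF cu a(2) a(3)])
      then show False using a(4) r(1) True by simp
    next
      case False
      have "sL (F!f0!s0) = - sL (F!f!s)" using c_rowopp[OF a(1) assms(3) f0 r(2) False e'(1,2)] .
      then have "(sL (F!f!s) * u) mod m = ((- sL (F!f!s)) * 1) mod m" using e'(3) by simp
      then show False using L_sum3[OF cu a(2) a(3), of 1] by simp
    qed
  qed
qed

lemma CC_pt: assumes "c < nC" "c' < nC" "s < 3" "s' < 3" "cpt c s = cpt c' s'" shows "c = c' \<and> s = s'"
proof -
  have e: "sE (Cp!c!s) = sE (Cp!c'!s')" "sJ (Cp!c!s) = sJ (Cp!c'!s')" "sL (Cp!c!s) mod m = sL (Cp!c'!s') mod m"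
    using assms(5) unfolding cpt_def by auto
  have b: "\<bar>sL (Cp!c!s)\<bar> \<le> B" "\<bar>sL (Cp!c'!s')\<bar> \<le> B" using c_cslot[OF assms(1,3)] c_cslot[OF assms(2,4)] by auto
  have "m dvd sL (Cp!c!s) - sL (Cp!c'!s')" using e(3) by (simp add: mod_eq_dvd_iff)
  then have "sL (Cp!c!s) - sL (Cp!c'!s') = 0" using b mB by (intro dvd_small_int) auto
  then have "Cp!c!s = Cp!c'!s'" using e(1,2) unfolding sE_def sL_def sJ_def by (simp add: prod_eq_iff)
  then show ?thesis using c_cdist assms by blast
qed

lemma key_f: assumes "f < nF" "s < 3" "t < 3"
  shows "key k m (fpt f u s) (fpt f u t) = (sJ (F!f!s), sJ (F!f!t), (sE (F!f!t) - sE (F!f!s)) mod k, (mu F f s t * u) mod m)"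
proof -
  have "((sL (F!f!t) * u) mod m - (sL (F!f!s) * u) mod m) mod m = (sL (F!f!t) * u - sL (F!f!s) * u) mod m"
    by (rule mod_diff_eq)
  also have "sL (F!f!t) * u - sL (F!f!s) * u = mu F f s t * u" unfolding mu_def by (simp add: algebra_simps)
  finally show ?thesis unfolding key_def fpt_def by simp
qed

lemma key_c: "key k m (cpt c s) (cpt c t) = (sJ (Cp!c!s), sJ (Cp!c!t), (sE (Cp!c!t) - sE (Cp!c!s)) mod k, (sL (Cp!c!t) - sL (Cp!c!s)) mod m)"
  unfolding key_def cpt_def by (simp add: mod_diff_eq)

lemma FF_key: assumes "(f,u) \<in> FI" "(f',u') \<in> FI" "st \<in> set prs" "st' \<in> set prs"
  "key k m (fpt f u (fst st)) (fpt f u (snd st)) = key k m (fpt f' u' (fst st')) (fpt f' u' (snd st'))"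
  shows "f = f' \<and> u = u' \<and> st = st'"
proof -
  have a: "f < nF" "1 \<le> u" "u \<le> h" "f' < nF" "1 \<le> u'" "u' \<le> h" using assms(1,2) unfolding FI_def by auto
  have p: "fst st < 3" "snd st < 3" "fst st' < 3" "snd st' < 3" using prs_mem assms(3,4) by auto
  have e: "cls k F f (fst st) (snd st) = cls k F f' (fst st') (snd st')"
     "(mu F f (fst st) (snd st) * u) mod m = (mu F f' (fst st') (snd st') * u') mod m"
    using assms(5) key_f[OF a(1) p(1,2)] key_f[OF a(4) p(3,4)] unfolding cls_def by auto
  have cu: "coprime m (mu F f (fst st) (snd st))" using c_mu[OF a(1) assms(3)] unitUl by blast
  show ?thesis
  proof (cases "(f,st) = (f',st')")
    case True
    then have "(mu F f (fst st) (snd st) * u) mod m = (mu F f (fst st) (snd st) * u') mod m" using e(2) by simp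
    then have "u = u'" by (rule L_eqH[OF cu a(2) a(3) a(5) a(6)])
    then show ?thesis using True by simp
  next
    case False
    have "mu F f' (fst st') (snd st') = - mu F f (fst st) (snd st)" using c_clsopp[OF a(1) assms(3) a(4) assms(4) False e(1)] .
    then have "(mu F f (fst st) (snd st) * u) mod m = ((- mu F f (fst st) (snd st)) * u') mod m" using e(2) by simp
    then have False by (rule L_sumH[OF cu a(2) a(3) a(5) a(6)])
    then show ?thesis ..
  qed
qed

lemma FC_key: assumes "(f,u) \<in> FI" "c < nC" "st \<in> set prs" "st' \<in> set prs"
  "key k m (fpt f u (fst st)) (fpt f u (snd st)) = key k m (cpt c (fst st')) (cpt c (snd st'))"
  shows False
proof -
  have a: "f < nF" "1 \<le> u" "u \<le> h" "\<not> (f \<in> set R \<and> u = 1)" using assms(1) unfolding FI_def by auto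
  have p: "fst st < 3" "snd st < 3" using prs_mem assms(3) by auto
  define cl where "cl = (sJ (Cp!c!(fst st')), sJ (Cp!c!(snd st')), (sE (Cp!c!(snd st')) - sE (Cp!c!(fst st'))) mod k)"
  define d where "d = sL (Cp!c!(snd st')) - sL (Cp!c!(fst st'))"
  have e: "cls k F f (fst st) (snd st) = cl" "(mu F f (fst st) (snd st) * u) mod m = d mod m"
    using assms(5) key_f[OF a(1) p] key_c unfolding cls_def cl_def d_def by auto
  let ?mu = "mu F f (fst st) (snd st)"
  have cu: "coprime m ?mu" using c_mu[OF a(1) assms(3)] unitUl by blast
  have al: "allowed k F R cl d" using c_allowed[OF assms(2,4)] unfolding ckey_def cl_def d_def by simp
  then consider (z) "d = 0"
    | (r) f0 st0 where "f0 \<in> set R" "st0 \<in> set prs" "cls k F f0 (fst st0) (snd st0) = cl" "mu F f0 (fst st0) (snd st0) = d"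
    | (n) "\<forall>f\<in>set [0..<nF]. \<forall>st\<in>set prs. cls k F f (fst st) (snd st) = cl \<longrightarrow>
        d \<in> {- mu F f (fst st) (snd st), -2 * mu F f (fst st) (snd st), -3 * mu F f (fst st) (snd st)}"
    unfolding allowed_def by blast
  then show False
  proof cases
    case z
    then show False using e(2) L_zeroH[OF cu a(2) a(3)] by simp
  next
    case r
    have f0: "f0 < nF" using c_Rlt r(1) by blast
    show False
    proof (cases "(f,st) = (f0,st0)")
      case True
      then have "(?mu * u) mod m = (?mu * 1) mod m" using e(2) r(4) by simp
      then have "u = 1" by (rule L_oneH[OF cu a(2) a(3)])
      then show False using a(4) r(1) True by simp
    next
      case False
      have "mu F f0 (fst st0) (snd st0) = - ?mu" using c_clsopp[OF a(1) assms(3) f0 r(2) False] e(1) r(3) by simp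
      then have "(?mu * u) mod m = ((- ?mu) * 1) mod m" using e(2) r(4) by simp
      then show False using L_sum3[OF cu a(2) a(3), of 1] by simp
    qed
  next
    case n
    then have "d \<in> {- ?mu, -2 * ?mu, -3 * ?mu}" using e(1) a(1) assms(3) by auto
    then obtain v where v: "v \<in> {1,2,3}" "d = (- ?mu) * v"
    proof (elim insertE)
      assume "d = - ?mu" then show ?thesis using that[of 1] by simp
    next
      assume "d = -2 * ?mu" then show ?thesis using that[of 2] by simp
    next
      assume "d = -3 * ?mu" then show ?thesis using that[of 3] by simp
    qed simp
    have "(?mu * u) mod m = ((- ?mu) * v) mod m" using e(2) v(2) by simp
    then show False using L_sum3[OF cu a(2) a(3) v(1)] by blast
  qed
qed

lemma CC_key: assumes "c < nC" "c' < nC" "st \<in> set prs" "st' \<in> set prs"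
  "key k m (cpt c (fst st)) (cpt c (snd st)) = key k m (cpt c' (fst st')) (cpt c' (snd st'))"
  shows "c = c' \<and> st = st'"
proof -
  have p: "fst st < 3" "snd st < 3" "fst st' < 3" "snd st' < 3" using prs_mem assms(3,4) by auto
  have e: "fst (ckey c (fst st) (snd st)) = fst (ckey c' (fst st') (snd st'))"
          "fst (snd (ckey c (fst st) (snd st))) = fst (snd (ckey c' (fst st') (snd st')))"
          "fst (snd (snd (ckey c (fst st) (snd st)))) = fst (snd (snd (ckey c' (fst st') (snd st'))))"
          "snd (snd (snd (ckey c (fst st) (snd st)))) mod m = snd (snd (snd (ckey c' (fst st') (snd st')))) mod m"
    using assms(5) unfolding key_c ckey_def by auto
  have b: "\<bar>snd (snd (snd (ckey c (fst st) (snd st))))\<bar> \<le> 2*B" "\<bar>snd (snd (snd (ckey c' (fst st') (snd st'))))\<bar> \<le> 2*B"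
    using c_cslot[OF assms(1) p(1)] c_cslot[OF assms(1) p(2)] c_cslot[OF assms(2) p(3)] c_cslot[OF assms(2) p(4)]
    unfolding ckey_def by auto
  have "m dvd snd (snd (snd (ckey c (fst st) (snd st)))) - snd (snd (snd (ckey c' (fst st') (snd st'))))"
    using e(4) by (simp add: mod_eq_dvd_iff)
  then have "snd (snd (snd (ckey c (fst st) (snd st)))) - snd (snd (snd (ckey c' (fst st') (snd st')))) = 0"
    using b mB by (intro dvd_small_int) auto
  then have "ckey c (fst st) (snd st) = ckey c' (fst st') (snd st')" using e(1-3) by (simp add: prod_eq_iff)
  then show ?thesis using c_ckdist assms(1-4) by blast
qed

lemma card_FI: "card FI = nF * nat h - length R"
proof -
  have FIeq: "FI = ({..<nF} \<times> {1..h}) - (\<lambda>f. (f, 1::int)) ` set R" unfolding FI_def by auto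
  have sub: "(\<lambda>f. (f, 1::int)) ` set R \<subseteq> {..<nF} \<times> {1..h}" using c_Rlt h_ge by auto
  have "card ((\<lambda>f. (f, 1::int)) ` set R) = length R"
    using c_Rdist by (simp add: card_image inj_on_def distinct_card)
  moreover have "card ({..<nF} \<times> {1..h}) = nF * nat h" by (simp add: card_cartesian_product)
  ultimately show ?thesis unfolding FIeq using card_Diff_subset[OF _ sub] by simp
qed

lemma fam_Qex: "Qex (nat (k*m))"
proof -
  obtain c0 where c0: "c0 < nC" "sJ (Cp!c0!0) \<noteq> sJ (Cp!c0!1)" "sJ (Cp!c0!0) \<noteq> sJ (Cp!c0!2)" "sJ (Cp!c0!1) \<noteq> sJ (Cp!c0!2)"
    using c_trans by blast
  show ?thesis
proof (rule starter_Qex[where I=Ix and pt=ptx and iz="Inr c0"])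
  show "k > 0" by (rule k0)
  show "m > 0" by (rule m0)
  have fFI: "finite FI" unfolding FI_def
    by (rule finite_subset[of _ "{..<nF} \<times> {1..h}"]) auto
  show "finite Ix" unfolding Ix_def using fFI by simp
  have "card Ix = card (Inl ` FI :: ((nat \<times> int) + nat) set) + card (Inr ` {..<nC} :: ((nat \<times> int) + nat) set)"
    unfolding Ix_def by (rule card_Un_disjoint) (use fFI in auto)
  also have "\<dots> = card FI + nC" by (simp add: card_image)
  also have "\<dots> = nF * nat h - length R + (nat k + length R)" using card_FI c_lenC by simp
  also have "\<dots> = nat (k*m)"
  proof -
    have "length R \<le> nF * nat h"
    proof -
      have "length R = card (set R)" using c_Rdist by (simp add: distinct_card)
      also have "\<dots> \<le> card {..<nF}" using c_Rlt by (intro card_mono) auto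
      also have "\<dots> \<le> nF * nat h"
      proof -
        have "1 \<le> nat h" using h_ge by linarith
        then show ?thesis by simp
      qed
      finally show ?thesis .
    qed
    moreover have "nF = nat (2*k)" by (rule c_lenF)
    moreover have "nat (2*k) * nat h + nat k = nat (k*m)"
    proof -
      have "nat (2*k) * nat h + nat k = nat (2*k*h + k)" using k0 h_ge by (simp add: nat_mult_distrib nat_add_distrib)
      also have "2*k*h + k = k*m"
      proof -
        have "m = 2*h + 1" using h2 by simp
        then have "k*m = k*(2*h+1)" by (rule arg_cong)
        then show ?thesis by (simp add: algebra_simps)
      qed
      finally show ?thesis .
    qed
    ultimately show ?thesis by simp
  qed
  finally show "card Ix = nat (k*m)" .
next
  fix i s assume i: "i \<in> Ix" and s: "s < (3::nat)"
  show "ptx i s \<in> Yp k m"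
  proof (cases i)
    case (Inl fu)
    then have "fst fu < nF" using i unfolding Ix_def FI_def by auto
    then show ?thesis using Inl c_slot[OF _ s] m0 unfolding ptx_def fpt_def Yp_def by auto
  next
    case (Inr c)
    then have "c < nC" using i unfolding Ix_def by auto
    then show ?thesis using Inr c_cslot[OF _ s] m0 unfolding ptx_def cpt_def Yp_def by auto
  qed
next
  fix i s i' s' assume i: "i \<in> Ix" and i': "i' \<in> Ix" and s: "s < (3::nat)" and s': "s' < (3::nat)" and e: "ptx i s = ptx i' s'"
  show "i = i' \<and> s = s'"
  proof (cases i)
    case (Inl fu)
    then have fu: "fu \<in> FI" using i unfolding Ix_def by auto
    show ?thesis
    proof (cases i')
      case (Inl fu')
      then have fu': "fu' \<in> FI" using i' unfolding Ix_def by auto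
      have "fpt (fst fu) (snd fu) s = fpt (fst fu') (snd fu') s'" using e \<open>i = Inl fu\<close> Inl unfolding ptx_def by simp
      then have "fst fu = fst fu' \<and> snd fu = snd fu' \<and> s = s'" using FF_pt[of "fst fu" "snd fu" "fst fu'" "snd fu'"] fu fu' s s' by simp
      then show ?thesis using \<open>i = Inl fu\<close> Inl by (simp add: prod_eq_iff)
    next
      case (Inr c')
      then have c': "c' < nC" using i' unfolding Ix_def by auto
      have "fpt (fst fu) (snd fu) s = cpt c' s'" using e \<open>i = Inl fu\<close> Inr unfolding ptx_def by simp
      then have False using FC_pt[of "fst fu" "snd fu" c' s s'] fu c' s s' by simp
      then show ?thesis ..
    qed
  next
    case (Inr c)
    then have c: "c < nC" using i unfolding Ix_def by auto
    show ?thesis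
    proof (cases i')
      case (Inl fu')
      then have fu': "fu' \<in> FI" using i' unfolding Ix_def by auto
      have "fpt (fst fu') (snd fu') s' = cpt c s" using e \<open>i = Inr c\<close> Inl unfolding ptx_def by simp
      then have False using FC_pt[of "fst fu'" "snd fu'" c s' s] fu' c s s' by simp
      then show ?thesis ..
    next
      case (Inr c')
      then have c': "c' < nC" using i' unfolding Ix_def by auto
      have "cpt c s = cpt c' s'" using e \<open>i = Inr c\<close> Inr unfolding ptx_def by simp
      then show ?thesis using CC_pt[OF c c' s s'] \<open>i = Inr c\<close> Inr by simp
    qed
  qed
next
  fix i s t i' s' t' assume i: "i \<in> Ix" and i': "i' \<in> Ix" and st: "s < (3::nat)" "t < (3::nat)" "s' < (3::nat)" "t' < (3::nat)"
    "s \<noteq> t" "s' \<noteq> t'" and e: "key k m (ptx i s) (ptx i t) = key k m (ptx i' s') (ptx i' t')"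
  have P: "(s,t) \<in> set prs" "(s',t') \<in> set prs" using prs_in st by auto
  show "i = i' \<and> s = s' \<and> t = t'"
  proof (cases i)
    case (Inl fu)
    then have fu: "fu \<in> FI" using i unfolding Ix_def by auto
    show ?thesis
    proof (cases i')
      case (Inl fu')
      then have fu': "fu' \<in> FI" using i' unfolding Ix_def by auto
      have "key k m (fpt (fst fu) (snd fu) (fst (s,t))) (fpt (fst fu) (snd fu) (snd (s,t))) =
            key k m (fpt (fst fu') (snd fu') (fst (s',t'))) (fpt (fst fu') (snd fu') (snd (s',t')))"
        using e \<open>i = Inl fu\<close> Inl unfolding ptx_def by simp
      then have "fst fu = fst fu' \<and> snd fu = snd fu' \<and> (s,t) = (s',t')"
        using FF_key[of "fst fu" "snd fu" "fst fu'" "snd fu'" "(s,t)" "(s',t')"] fu fu' P by simp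
      then show ?thesis using \<open>i = Inl fu\<close> Inl by (simp add: prod_eq_iff)
    next
      case (Inr c')
      then have c': "c' < nC" using i' unfolding Ix_def by auto
      have "key k m (fpt (fst fu) (snd fu) (fst (s,t))) (fpt (fst fu) (snd fu) (snd (s,t))) =
            key k m (cpt c' (fst (s',t'))) (cpt c' (snd (s',t')))"
        using e \<open>i = Inl fu\<close> Inr unfolding ptx_def by simp
      then have False using FC_key[of "fst fu" "snd fu" c' "(s,t)" "(s',t')"] fu c' P by simp
      then show ?thesis ..
    qed
  next
    case (Inr c)
    then have c: "c < nC" using i unfolding Ix_def by auto
    show ?thesis
    proof (cases i')
      case (Inl fu')
      then have fu': "fu' \<in> FI" using i' unfolding Ix_def by auto
      have "key k m (fpt (fst fu') (snd fu') (fst (s',t'))) (fpt (fst fu') (snd fu') (snd (s',t'))) =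
            key k m (cpt c (fst (s,t))) (cpt c (snd (s,t)))"
        using e \<open>i = Inr c\<close> Inl unfolding ptx_def by simp
      then have False using FC_key[of "fst fu'" "snd fu'" c "(s',t')" "(s,t)"] fu' c P by simp
      then show ?thesis ..
    next
      case (Inr c')
      then have c': "c' < nC" using i' unfolding Ix_def by auto
      have "key k m (cpt c (fst (s,t))) (cpt c (snd (s,t))) = key k m (cpt c' (fst (s',t'))) (cpt c' (snd (s',t')))"
        using e \<open>i = Inr c\<close> Inr unfolding ptx_def by simp
      then have "c = c' \<and> (s,t) = (s',t')" using CC_key[OF c c' P] by simp
      then show ?thesis using \<open>i = Inr c\<close> Inr by simp
    qed
  qed
next
  show "Inr c0 \<in> Ix" unfolding Ix_def using c0 by simp
next
  fix s t assume s: "s < (3::nat)" and t: "t < (3::nat)" and e: "lev (ptx (Inr c0) s) = lev (ptx (Inr c0) t)"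
  have "sJ (Cp!c0!s) = sJ (Cp!c0!t)" using e unfolding ptx_def cpt_def lev_def by simp
  moreover have "s = 0 \<or> s = 1 \<or> s = 2" "t = 0 \<or> t = 1 \<or> t = 2" using s t by linarith+
  ultimately show "s = t" using c0 by fastforce
qed
qed

end


lemma chk2: "famchk 2 4 F2 R2 C2" unfolding famchk_def allowed_def F2_def R2_def C2_def cls_def mu_def sE_def sL_def sJ_def Ul_def prs_def by code_simp
lemma chk3: "famchk 3 2 F3 R3 C3" unfolding famchk_def allowed_def F3_def R3_def C3_def cls_def mu_def sE_def sL_def sJ_def Ul_def prs_def by code_simp

lemma Qex2m: assumes "coprime (int m) 6" "16 < m" shows "Qex (2*m)"
proof -
  interpret famctx 2 "int m" 4 F2 R2 C2
    by unfold_locales (use chk2 assms in auto)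
  show ?thesis using fam_Qex by (simp add: nat_mult_distrib)
qed

lemma Qex3m: assumes "coprime (int m) 6" "8 < m" shows "Qex (3*m)"
proof -
  interpret famctx 3 "int m" 2 F3 R3 C3
    by unfold_locales (use chk3 assms in auto)
  show ?thesis using fam_Qex by (simp add: nat_mult_distrib)
qed

lemma Qex1: "Qex 1"
proof -
  have "Qs {0::nat,1,2} (\<lambda>_. {{0,1,2}}) 1"
    by (rule QsI[where S="\<lambda>_. {0,1,2}"]) auto
  then show ?thesis by (rule Qex_of_Qs)
qed

lemma cop6: assumes "odd (m::nat)" "\<not> 3 dvd m" shows "coprime (int m) 6"
proof -
  have "coprime m 2" using assms(1) by (simp add: coprime_commute)
  moreover have "coprime m 3"
  proof -
    have "gcd m 3 dvd 3" by simp
    then have "gcd m 3 \<le> 3" by (simp add: dvd_imp_le)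
    moreover have "gcd m 3 \<noteq> 0" by simp
    moreover have "gcd m 3 \<noteq> 2"
    proof
      assume "gcd m 3 = 2"
      then have "(2::nat) dvd 3" using \<open>gcd m 3 dvd 3\<close> by simp
      then show False by simp
    qed
    moreover have "gcd m 3 \<noteq> 3" using assms(2) by (metis gcd_dvd1)
    ultimately have "gcd m 3 = 1" by linarith
    then show ?thesis by (simp add: coprime_iff_gcd_eq_1)
  qed
  ultimately have "coprime m (2*3)" by (simp only: coprime_mult_right_iff)
  then have "coprime m 6" by simp
  then have "coprime (int m) (int 6)" by (simp only: coprime_int_iff)
  then show ?thesis by simp
qed

lemma Qex_all: "n \<ge> 1 \<Longrightarrow> n \<noteq> 2 \<Longrightarrow> n \<noteq> 3 \<Longrightarrow> Qex n"
proof (induction n rule: less_induct)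
  case (less n)
  show ?case
  proof (cases "n = 1")
    case True then show ?thesis using Qex1 by simp
  next
    case n1: False
    show ?thesis
    proof (cases "4 dvd n")
      case True
      then obtain q where q: "n = q * 4" by (metis dvd_div_mult_self)
      show ?thesis
      proof (cases "q = 2 \<or> q = 3")
        case True then show ?thesis using q Qex8 Qex12 by auto
      next
        case False
        have "q \<ge> 1" "q < n" using q less.prems(1) by auto
        then have "Qex q" using less.IH False by simp
        then show ?thesis using product_Qex[OF \<open>Qex q\<close> OA4] q by simp
      qed
    next
      case n4: False
      show ?thesis
      proof (cases "9 dvd n")
        case True
        then obtain q where q: "n = q * 9" by (metis dvd_div_mult_self)
        show ?thesis
        proof (cases "q = 2 \<or> q = 3")
          case True then show ?thesis using q Qex18 Qex27 by auto
        next
          case False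
          have "q \<ge> 1" "q < n" using q less.prems(1) by auto
          then have "Qex q" using less.IH False by simp
          then show ?thesis using product_Qex[OF \<open>Qex q\<close> OA9] q by simp
        qed
      next
        case n9: False
        show ?thesis
        proof (cases "even n")
          case ev: True
          then obtain m where m: "n = 2*m" by blast
          have modd: "odd m"
          proof
            assume "even m"
            then obtain r where "m = 2*r" by blast
            then have "n = 4*r" using m by simp
            then show False using n4 by simp
          qed
          show ?thesis
          proof (cases "3 dvd m")
            case True
            then obtain p where p: "m = 3*p" by blast
            have podd: "odd p" using modd p by simp
            have p3: "\<not> 3 dvd p"
            proof
              assume "3 dvd p"
              then obtain r where "p = 3*r" by blast
              then have "n = 9*(2*r)" using m p by simp
              then show False using n9 by simp
            qed
            have cp: "coprime (int p) 6" using cop6[OF podd p3] .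
            show ?thesis
            proof (cases "p = 1")
              case True then show ?thesis using m p Qex6 by simp
            next
              case False
              then have "p > 0" using podd by (metis odd_pos)
              have "Qex (6*p)" using product_Qex[OF Qex6 OA_lin[OF cp \<open>p > 0\<close>] \<open>p > 0\<close>] by simp
              then show ?thesis using m p by simp
            qed
          next
            case False
            have cp: "coprime (int m) 6" using cop6[OF modd False] .
            show ?thesis
            proof (cases "16 < m")
              case True then show ?thesis using Qex2m[OF cp] m by simp
            next
              case small: False
              have "m \<noteq> 1" using less.prems m by auto
              have "m \<in> {5,7,11,13}"
              proof -
                have "m \<le> 16" using small by simp
                moreover have "m \<noteq> 1" "m \<noteq> 3" "m \<noteq> 9" "m \<noteq> 15" using \<open>m \<noteq> 1\<close> False by auto
                ultimately have "m = 5 \<or> m = 7 \<or> m = 11 \<or> m = 13" using modd by presburger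
                then show ?thesis by simp
              qed
              then show ?thesis using m Qex10 Qex14 Qex22 Qex26 by auto
            qed
          qed
        next
          case od: False
          show ?thesis
          proof (cases "3 dvd n")
            case True
            then obtain m where m: "n = 3*m" by blast
            have modd: "odd m" using od m by simp
            have m3: "\<not> 3 dvd m"
            proof
              assume "3 dvd m"
              then obtain r where "m = 3*r" by blast
              then have "n = 9*r" using m by simp
              then show False using n9 by simp
            qed
            have cp: "coprime (int m) 6" using cop6[OF modd m3] .
            show ?thesis
            proof (cases "8 < m")
              case True then show ?thesis using Qex3m[OF cp] m by simp
            next
              case small: False
              have "m \<noteq> 1" using less.prems m by auto
              have "m \<in> {5,7}"
              proof -
                have "m \<le> 8" using small by simp
                moreover have "m \<noteq> 1" "m \<noteq> 3" using \<open>m \<noteq> 1\<close> m3 by auto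
                ultimately have "m = 5 \<or> m = 7" using modd by presburger
                then show ?thesis by simp
              qed
              then show ?thesis using m Qex15 Qex21 by auto
            qed
          next
            case False
            have cp: "coprime (int n) 6" using cop6[OF od False] .
            have "n > 0" using less.prems by simp
            have "Qex (1*n)" using product_Qex[OF Qex1 OA_lin[OF cp \<open>n > 0\<close>] \<open>n > 0\<close>] .
            then show ?thesis by simp
          qed
        qed
      qed
    qed
  qed
qed

theorem theorem2p6:
  fixes n \<rho> :: nat
  assumes "n \<ge> 4" and "n \<noteq> 6" and "1 \<le> \<rho>" and "\<rho> \<le> n"
  shows "\<exists>X (\<B> :: nat set set). is_packing (3*n + \<rho>) 4 X \<B> \<and>
           card \<B> = n * \<rho> + D \<rho> 4 \<and> largest_PPC_size \<B> \<rho>"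
proof -
  have "Qex n" using Qex_all assms(1) by simp
  then show ?thesis using main_from_Q assms(3,4) by blast
qed


end
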